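(* $\mathcal{E}_\Lambda$ is non-increasing on average under local operations, for every spectrum $\Lambda$. Precisely: let $\{A_k\}$ be operators on $\mathbb{C}^{d_A}$ with $\sum_k A_k^\dagger A_k=\mathbb{1}$, and set $p_k=\|(A_k\otimes\mathbb{1})|\psi\rangle\|^2$, $|\psi_k\rangle=(A_k\otimes\mathbb{1})|\psi\rangle/\sqrt{p_k}$ (for $p_k>0$). Then $\sum_k p_k\sqrt{F^\Lambda_{\psi_k}}\ge\sqrt{F^\Lambda_\psi}$ and hence $\sum_k p_k\,\mathcal{E}_\Lambda(\psi_k)\le\mathcal{E}_\Lambda(\psi)$. The same holds for operators $\{B_k\}$ on $\mathbb{C}^{d_B}$ with $\sum_kB_k^\dagger B_k=\mathbb{1}$ acting as $\mathbb{1}\otimes B_k$. Consequently $\mathcal{E}_\Lambda$ is a pure-state bipartite entanglement monotone under LOCC.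
   Context: Let $d=d_A\le d_B$ and let $|\psi\rangle\in\mathbb{C}^{d_A}\otimes\mathbb{C}^{d_B}$ be a unit vector. A spectrum is a multiset $\Lambda=\{\lambda_1,\dots,\lambda_d\}$ of unimodular complex numbers. Let $\mathcal{W}_\Lambda$ be the set of unitary matrices on $\mathbb{C}^{d_A}$ whose eigenvalues, counted with multiplicity, are exactly $\Lambda$. Define $F^\Lambda_\psi=\max_{W\in\mathcal{W}_\Lambda}|\langle\psi|(W\otimes \mathbb{1}_B)|\psi\rangle|^2$ and $\mathcal{E}_\Lambda(\psi)=1-F^\Lambda_\psi$. *)

theory Defs
  imports "Jordan_Normal_Form.Char_Poly" "HOL-Library.Multiset"
begin

text \<open>Conventions. A vector of C^{dA} (x) C^{dB} is a complex vec of dimension dA*dB,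
  the basis vector e_i (x) f_j having index i*dB + j (i < dA, j < dB).\<close>

definition adj :: "complex mat \<Rightarrow> complex mat" where
  "adj M = mat (dim_col M) (dim_row M) (\<lambda>(i,j). cnj (M $$ (j,i)))"

definition unitary_mat :: "nat \<Rightarrow> complex mat \<Rightarrow> bool" where
  "unitary_mat n W \<longleftrightarrow> W \<in> carrier_mat n n \<and> adj W * W = 1\<^sub>m n"

definition braket :: "complex vec \<Rightarrow> complex vec \<Rightarrow> complex" where
  "braket u v = (\<Sum>i<dim_vec v. cnj (u $ i) * v $ i)"

definition sqnorm :: "complex vec \<Rightarrow> real" where
  "sqnorm v = (\<Sum>i<dim_vec v. (cmod (v $ i))\<^sup>2)"

text \<open>X (x) 1_B, for X a dA x dA matrix\<close>
definition tensor_id_right :: "nat \<Rightarrow> complex mat \<Rightarrow> complex mat" where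
  "tensor_id_right dB X = mat (dim_row X * dB) (dim_col X * dB)
     (\<lambda>(r,c). if r mod dB = c mod dB then X $$ (r div dB, c div dB) else 0)"

text \<open>1_A (x) Y, for Y a dB x dB matrix\<close>
definition tensor_id_left :: "nat \<Rightarrow> complex mat \<Rightarrow> complex mat" where
  "tensor_id_left dA Y = mat (dA * dim_row Y) (dA * dim_col Y)
     (\<lambda>(r,c). if r div dim_row Y = c div dim_col Y
              then Y $$ (r mod dim_row Y, c mod dim_col Y) else 0)"

definition is_spectrum :: "nat \<Rightarrow> complex multiset \<Rightarrow> bool" where
  "is_spectrum d \<Lambda> \<longleftrightarrow> size \<Lambda> = d \<and> (\<forall>x\<in>#\<Lambda>. cmod x = 1)"

definition W_set :: "nat \<Rightarrow> complex multiset \<Rightarrow> complex mat set" where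
  "W_set d \<Lambda> = {W. unitary_mat d W \<and> char_poly W = (\<Prod>x\<in>#\<Lambda>. [:-x, 1:])}"

text \<open>F^Lambda_psi = max over W in W_Lambda of |<psi|(W (x) 1)|psi>|^2 (the max is attained,
  by compactness, so it equals the supremum)\<close>
definition F_fid :: "nat \<Rightarrow> nat \<Rightarrow> complex multiset \<Rightarrow> complex vec \<Rightarrow> real" where
  "F_fid dA dB \<Lambda> \<psi> =
     (SUP W\<in>W_set dA \<Lambda>. (cmod (braket \<psi> (tensor_id_right dB W *\<^sub>v \<psi>)))\<^sup>2)"

definition E_ent :: "nat \<Rightarrow> nat \<Rightarrow> complex multiset \<Rightarrow> complex vec \<Rightarrow> real" where
  "E_ent dA dB \<Lambda> \<psi> = 1 - F_fid dA dB \<Lambda> \<psi>"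

end

theory Submission
  imports Defs "Jordan_Normal_Form.Spectral_Radius" "Jordan_Normal_Form.Schur_Decomposition"
begin


lemma sum_mult_split: "(\<Sum>r<a*b. f r) = (\<Sum>i<a. \<Sum>j<b. (f::nat\<Rightarrow>'a::comm_monoid_add) (i*b+j))"
proof (induction a)
  case 0 then show ?case by simp
next
  case (Suc a)
  have e: "{..<Suc a * b} = {..<a*b} \<union> (\<lambda>j. a*b+j) ` {..<b}"
  proof -
    { fix r assume r: "r < Suc a*b" "\<not> r < a*b"
      then have "r \<in> (\<lambda>j. a*b+j) ` {..<b}" by (intro image_eqI[of _ _ "r - a*b"]) auto }
    then show ?thesis by auto
  qed
  have "(\<Sum>r<Suc a*b. f r) = (\<Sum>r<a*b. f r) + (\<Sum>r\<in>(\<lambda>j. a*b+j) ` {..<b}. f r)"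
    unfolding e by (rule sum.union_disjoint) auto
  also have "(\<Sum>r\<in>(\<lambda>j. a*b+j) ` {..<b}. f r) = (\<Sum>j<b. f (a*b+j))"
    by (subst sum.reindex) (auto simp: inj_on_def)
  finally show ?case using Suc by simp
qed

lemma mult_idx: "A \<in> carrier_mat n m \<Longrightarrow> B \<in> carrier_mat m p \<Longrightarrow> i < n \<Longrightarrow> j < p \<Longrightarrow>
  (A * B) $$ (i,j) = (\<Sum>k<m. A $$ (i,k) * B $$ (k,j))"
  by (auto simp: scalar_prod_def atLeast0LessThan intro!: sum.cong)

lemma adj_carrier[simp]: "A \<in> carrier_mat n m \<Longrightarrow> adj A \<in> carrier_mat m n" unfolding adj_def by auto
lemma adj_dims[simp]: "dim_row (adj A) = dim_col A" "dim_col (adj A) = dim_row A" unfolding adj_def by auto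
lemma adj_idx[simp]: "i < dim_col A \<Longrightarrow> j < dim_row A \<Longrightarrow> adj A $$ (i,j) = cnj (A $$ (j,i))"
  unfolding adj_def by auto
lemma adj_adj[simp]: "adj (adj A) = A" by (rule eq_matI, auto simp: adj_def)
lemma adj_mult: assumes "A \<in> carrier_mat n m" "B \<in> carrier_mat m p" shows "adj (A*B) = adj B * adj A"
proof (rule eq_matI)
  fix i j assume ij: "i < dim_row (adj B * adj A)" "j < dim_col (adj B * adj A)"
  then have i: "i < p" and j: "j < n" using assms by auto
  show "adj (A * B) $$ (i, j) = (adj B * adj A) $$ (i, j)"
    using i j assms by (simp add: mult_idx[of "adj B" p m "adj A" n] mult_idx[of A n m B p] mult.commute del: index_mult_mat(1))
qed (insert assms, auto)
lemma adj_one[simp]: "adj (1\<^sub>m n) = 1\<^sub>m n" by (rule eq_matI, auto simp: adj_def)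

lemma unitary_carrier: "unitary_mat n U \<Longrightarrow> U \<in> carrier_mat n n" unfolding unitary_mat_def by auto
lemma unitary_left: "unitary_mat n U \<Longrightarrow> adj U * U = 1\<^sub>m n" unfolding unitary_mat_def by auto
lemma unitary_right: "unitary_mat n U \<Longrightarrow> U * adj U = 1\<^sub>m n"
  unfolding unitary_mat_def using mat_mult_left_right_inverse[of "adj U" n U] by auto
lemma unitary_adj: "unitary_mat n U \<Longrightarrow> unitary_mat n (adj U)"
  using unitary_right[of n U] unfolding unitary_mat_def by auto
lemma unitary_one: "unitary_mat n (1\<^sub>m n)" unfolding unitary_mat_def by auto
lemma unitary_mult: assumes U: "unitary_mat n U" and V: "unitary_mat n V" shows "unitary_mat n (U*V)"
proof -
  have c: "U \<in> carrier_mat n n" "V \<in> carrier_mat n n" using U V unitary_carrier by auto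
  have "adj (U*V) * (U*V) = adj V * adj U * (U * V)"
    using c by (simp add: adj_mult[of U n n V n])
  also have "\<dots> = adj V * (adj U * (U * V))" using c by (simp add: assoc_mult_mat[of _ n n _ n _ n])
  also have "adj U * (U * V) = (adj U * U) * V" using c by (simp add: assoc_mult_mat[of _ n n _ n _ n])
  also have "\<dots> = V" using unitary_left[OF U] c by simp
  also have "adj V * V = 1\<^sub>m n" using unitary_left[OF V] .
  finally show ?thesis using c unfolding unitary_mat_def by auto
qed

definition ptr :: "complex mat \<Rightarrow> complex" where "ptr X = (\<Sum>i<dim_row X. X $$ (i,i))"

lemma ptr_mult: "A \<in> carrier_mat n m \<Longrightarrow> B \<in> carrier_mat m n \<Longrightarrow>
   ptr (A*B) = (\<Sum>i<n. \<Sum>k<m. A$$(i,k) * B$$(k,i))"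
  unfolding ptr_def by (auto simp: mult_idx simp del: index_mult_mat(1) intro!: sum.cong)

lemma ptr_comm: "A \<in> carrier_mat n m \<Longrightarrow> B \<in> carrier_mat m n \<Longrightarrow> ptr (A*B) = ptr (B*A)"
  by (simp add: ptr_mult[of A n m B] ptr_mult[of B m n A] mult.commute sum.swap[of _ "{..<n}"])




definition ext :: "complex \<Rightarrow> complex mat \<Rightarrow> complex mat" where
  "ext a A = mat (Suc (dim_row A)) (Suc (dim_col A)) (\<lambda>(i,j). if i = 0 \<and> j = 0 then a
      else if i = 0 \<or> j = 0 then 0 else A $$ (i - 1, j - 1))"

lemma ext_carrier: "A \<in> carrier_mat n m \<Longrightarrow> ext a A \<in> carrier_mat (Suc n) (Suc m)"
  unfolding ext_def by auto

lemma ext_mult: assumes A: "A \<in> carrier_mat n m" and B: "B \<in> carrier_mat m p"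
  shows "ext a A * ext b B = ext (a*b) (A*B)"
proof (rule eq_matI)
  fix i j assume "i < dim_row (ext (a * b) (A * B))" "j < dim_col (ext (a * b) (A * B))"
  then have i: "i < Suc n" and j: "j < Suc p" using A B by (auto simp: ext_def)
  have "(ext a A * ext b B) $$ (i,j) = (\<Sum>k<Suc m. ext a A $$ (i,k) * ext b B $$ (k,j))"
    by (rule mult_idx[OF ext_carrier[OF A] ext_carrier[OF B] i j])
  also have "\<dots> = ext a A $$ (i,0) * ext b B $$ (0,j) + (\<Sum>k<m. ext a A $$ (i,Suc k) * ext b B $$ (Suc k,j))"
    by (simp only: sum.lessThan_Suc_shift)
  also have "\<dots> = ext (a*b) (A*B) $$ (i,j)"
  proof (cases i)
    case 0 then show ?thesis using i j A B by (cases j) (auto simp: ext_def)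
  next
    case (Suc i')
    then show ?thesis using i j A B
      by (cases j) (auto simp: ext_def mult_idx[OF A B] simp del: index_mult_mat(1))
  qed
  finally show "(ext a A * ext b B) $$ (i,j) = ext (a*b) (A*B) $$ (i,j)" .
qed (insert A B, auto simp: ext_def)

lemma ext_adj: "adj (ext a A) = ext (cnj a) (adj A)"
  by (rule eq_matI) (auto simp: ext_def adj_def)

lemma ext_one: "ext 1 (1\<^sub>m n) = 1\<^sub>m (Suc n)"
  by (rule eq_matI) (auto simp: ext_def)

lemma unitary_ext: assumes "unitary_mat n U" shows "unitary_mat (Suc n) (ext 1 U)"
proof -
  have U: "U \<in> carrier_mat n n" using assms unitary_carrier by auto
  have "adj (ext 1 U) * ext 1 U = ext 1 (adj U * U)"
    by (simp add: ext_adj ext_mult[of "adj U" n n U n, OF adj_carrier[OF U] U])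
  also have "\<dots> = 1\<^sub>m (Suc n)" using unitary_left[OF assms] ext_one by simp
  finally show ?thesis using ext_carrier[OF U] unfolding unitary_mat_def by auto
qed

lemma sqnorm_cpx: "complex_of_real (sqnorm v) = (\<Sum>i<dim_vec v. v $ i * cnj (v $ i))"
  unfolding sqnorm_def of_real_sum by (rule sum.cong[OF refl]) (rule complex_norm_square)

lemma sqnorm_nonneg: "sqnorm v \<ge> 0" unfolding sqnorm_def by (auto intro: sum_nonneg)

lemma sqnorm_zero: assumes "sqnorm v = 0" "i < dim_vec v" shows "v $ i = 0"
proof -
  have "\<forall>i\<in>{..<dim_vec v}. (cmod (v $ i))\<^sup>2 = 0"
    using assms(1) unfolding sqnorm_def by (subst sum_nonneg_eq_0_iff[symmetric]) auto
  then show ?thesis using assms(2) by auto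
qed

lemma sqnorm_smult: "sqnorm (c \<cdot>\<^sub>v v) = (cmod c)\<^sup>2 * sqnorm v"
  unfolding sqnorm_def by (simp add: sum_distrib_left norm_mult power_mult_distrib)

lemma unit_completion: assumes v: "v \<in> carrier_vec n" and nv: "sqnorm v = 1"
  shows "\<exists>U. unitary_mat n U \<and> (\<forall>i<n. U $$ (i,0) = v $ i)"
proof -
  have v0: "v \<noteq> 0\<^sub>v n" using nv unfolding sqnorm_def by auto
  then have n0: "n > 0" using v by (cases n) auto
  interpret cof_vec_space n "TYPE(complex)" .
  define b where "b = basis_completion v"
  from basis_completion[OF v v0, folded b_def]
  have dist_b: "distinct b" and indep: "\<not> lin_dep (set b)" and bc: "set b \<subseteq> carrier_vec n"
    and hdb: "hd b = v" and len_b: "length b = n" by auto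
  from hdb len_b n0 obtain vs where bv: "b = v # vs" by (cases b, auto)
  define ws where "ws = gram_schmidt n b"
  from gram_schmidt_result[OF bc dist_b indep refl, folded ws_def]
  have wsc: "set ws \<subseteq> carrier_vec n" and orth: "corthogonal ws" and lws: "length ws = n"
    by (auto simp: len_b)
  have hdws: "hd ws = v" unfolding ws_def bv using gram_schmidt_hd[OF v] by simp
  have ws0: "ws ! 0 = v" using hdws lws n0 by (cases ws) auto
  define c where "c = (\<lambda>i. 1 / complex_of_real (sqrt (sqnorm (ws ! i))))"
  define U where "U = mat n n (\<lambda>(i,j). c j * ws ! j $ i)"
  have dimw: "\<And>j. j < n \<Longrightarrow> dim_vec (ws ! j) = n" using wsc lws by (auto simp: set_conv_nth)
  have Uc: "U \<in> carrier_mat n n" unfolding U_def by auto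
  have sp: "\<And>i j. i < n \<Longrightarrow> j < n \<Longrightarrow> ws ! j \<bullet>c ws ! i = (\<Sum>r<n. ws ! j $ r * cnj (ws ! i $ r))"
    using dimw by (simp add: scalar_prod_def atLeast0LessThan)
  have "adj U * U = 1\<^sub>m n"
  proof (rule eq_matI)
    fix i j assume "i < dim_row (1\<^sub>m n)" "j < dim_col (1\<^sub>m n)"
    then have i: "i < n" and j: "j < n" by auto
    have "(adj U * U) $$ (i,j) = (\<Sum>r<n. cnj (c i * ws ! i $ r) * (c j * ws ! j $ r))"
      using i j Uc by (simp add: mult_idx[of _ n n _ n] U_def del: index_mult_mat(1))
    also have "\<dots> = cnj (c i) * c j * (ws ! j \<bullet>c ws ! i)"
      by (simp add: sp i j sum_distrib_left mult_ac)
    also have "\<dots> = 1\<^sub>m n $$ (i,j)"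
    proof (cases "i = j")
      case True
      have "ws ! i \<bullet>c ws ! i = complex_of_real (sqnorm (ws ! i))"
        by (simp add: sp i sqnorm_cpx dimw)
      moreover have "ws ! i \<bullet>c ws ! i \<noteq> 0" using corthogonalD[OF orth, of i i] i lws by auto
      ultimately have pos: "sqnorm (ws ! i) > 0" using sqnorm_nonneg[of "ws ! i"] by force
      define t where "t = sqnorm (ws ! i)"
      have ci: "c i = complex_of_real (1 / sqrt t)" unfolding c_def t_def by simp
      have r: "(1 / sqrt t) * (1 / sqrt t) * t = 1" using pos unfolding t_def[symmetric] by (simp add: field_simps)
      have "cnj (c i) * c i * (ws ! i \<bullet>c ws ! i) = 1"
        unfolding ci \<open>ws ! i \<bullet>c ws ! i = _\<close> t_def[symmetric] complex_cnj_complex_of_real of_real_mult[symmetric] r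
        by simp
      then show ?thesis using True i by simp
    next
      case False
      then show ?thesis using corthogonalD[OF orth, of j i] i j lws by auto
    qed
    finally show "(adj U * U) $$ (i,j) = 1\<^sub>m n $$ (i,j)" .
  qed (insert Uc, auto)
  then have "unitary_mat n U" using Uc unfolding unitary_mat_def by auto
  moreover have "\<forall>i<n. U $$ (i,0) = v $ i" using n0 nv ws0 by (auto simp: U_def c_def)
  ultimately show ?thesis by blast
qed




lemma sqnorm_pos: assumes "v \<in> carrier_vec n" "v \<noteq> 0\<^sub>v n" shows "sqnorm v > 0"
proof -
  have "sqnorm v \<noteq> 0"
  proof
    assume "sqnorm v = 0"
    then have "v = 0\<^sub>v n" using sqnorm_zero[of v] assms(1) by (intro eq_vecI) auto
    then show False using assms(2) by simp
  qed
  then show ?thesis using sqnorm_nonneg[of v] by simp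
qed

lemma normalize_vec: assumes v: "v \<in> carrier_vec n" "v \<noteq> 0\<^sub>v n"
  defines "w \<equiv> (1 / complex_of_real (sqrt (sqnorm v))) \<cdot>\<^sub>v v"
  shows "w \<in> carrier_vec n" "sqnorm w = 1"
proof -
  show "w \<in> carrier_vec n" using v unfolding w_def by auto
  have p: "sqnorm v > 0" by (rule sqnorm_pos[OF v])
  have "sqnorm w = (cmod (1 / complex_of_real (sqrt (sqnorm v))))\<^sup>2 * sqnorm v"
    unfolding w_def by (rule sqnorm_smult)
  also have "\<dots> = 1" using p by (simp add: norm_divide power_divide)
  finally show "sqnorm w = 1" .
qed

lemma unit_eigen: assumes H: "H \<in> carrier_mat n n" and n: "n > 0"
  shows "\<exists>w \<mu>. w \<in> carrier_vec n \<and> sqnorm w = 1 \<and> H *\<^sub>v w = \<mu> \<cdot>\<^sub>v w"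
proof -
  obtain \<mu> where "\<mu> \<in> spectrum H" using spectrum_non_empty[OF H n] by auto
  then obtain v where ev: "eigenvector H v \<mu>" unfolding spectrum_def eigenvalue_def by auto
  then have v: "v \<in> carrier_vec n" "v \<noteq> 0\<^sub>v n" and Hv: "H *\<^sub>v v = \<mu> \<cdot>\<^sub>v v"
    using H unfolding eigenvector_def by auto
  define c where "c = 1 / complex_of_real (sqrt (sqnorm v))"
  have "H *\<^sub>v (c \<cdot>\<^sub>v v) = \<mu> \<cdot>\<^sub>v (c \<cdot>\<^sub>v v)"
    using mult_mat_vec[OF H v(1)] Hv by (simp add: smult_smult_assoc mult.commute)
  then show ?thesis using normalize_vec[OF v] unfolding c_def[symmetric] by blast
qed

lemma pair_lemma: assumes X: "X \<in> carrier_mat n m" and n: "n > 0" and m: "m > 0"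
  shows "\<exists>w v a b. w \<in> carrier_vec n \<and> sqnorm w = 1 \<and> v \<in> carrier_vec m \<and> sqnorm v = 1 \<and>
     X *\<^sub>v v = a \<cdot>\<^sub>v w \<and> adj X *\<^sub>v w = b \<cdot>\<^sub>v v"
proof -
  have aX: "adj X \<in> carrier_mat m n" using X by simp
  obtain w \<mu> where w: "w \<in> carrier_vec n" "sqnorm w = 1" and ew: "(X * adj X) *\<^sub>v w = \<mu> \<cdot>\<^sub>v w"
    using unit_eigen[OF mult_carrier_mat[OF X aX] n] by blast
  obtain v \<nu> where v: "v \<in> carrier_vec m" "sqnorm v = 1" and ev: "(adj X * X) *\<^sub>v v = \<nu> \<cdot>\<^sub>v v"
    using unit_eigen[OF mult_carrier_mat[OF aX X] m] by blast
  have ew': "X *\<^sub>v (adj X *\<^sub>v w) = \<mu> \<cdot>\<^sub>v w" using ew X aX w by simp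
  have ev': "adj X *\<^sub>v (X *\<^sub>v v) = \<nu> \<cdot>\<^sub>v v" using ev X aX v by simp
  show ?thesis
  proof (cases "adj X *\<^sub>v w = 0\<^sub>v m")
    case False
    define t where "t = adj X *\<^sub>v w"
    have t: "t \<in> carrier_vec m" "t \<noteq> 0\<^sub>v m" using False aX w unfolding t_def by auto
    define s where "s = complex_of_real (sqrt (sqnorm t))"
    have s0: "s \<noteq> 0" using sqnorm_pos[OF t] unfolding s_def by simp
    define v' where "v' = (1 / s) \<cdot>\<^sub>v t"
    have v': "v' \<in> carrier_vec m" "sqnorm v' = 1" using normalize_vec[OF t] unfolding v'_def s_def by auto
    have "X *\<^sub>v v' = (1/s) \<cdot>\<^sub>v (\<mu> \<cdot>\<^sub>v w)" unfolding v'_def t_def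
      using mult_mat_vec[OF X, of "adj X *\<^sub>v w" "1/s"] aX w ew' by simp
    also have "\<dots> = (\<mu>/s) \<cdot>\<^sub>v w" by (simp add: smult_smult_assoc)
    finally have 1: "X *\<^sub>v v' = (\<mu>/s) \<cdot>\<^sub>v w" .
    have "s \<cdot>\<^sub>v v' = t" unfolding v'_def using s0 by (simp add: smult_smult_assoc)
    then have 2: "adj X *\<^sub>v w = s \<cdot>\<^sub>v v'" unfolding t_def by simp
    show ?thesis using w v' 1 2 by blast
  next
    case Z: True
    show ?thesis
    proof (cases "X *\<^sub>v v = 0\<^sub>v n")
      case False
      define t where "t = X *\<^sub>v v"
      have t: "t \<in> carrier_vec n" "t \<noteq> 0\<^sub>v n" using False X v unfolding t_def by auto
      define s where "s = complex_of_real (sqrt (sqnorm t))"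
      have s0: "s \<noteq> 0" using sqnorm_pos[OF t] unfolding s_def by simp
      define w' where "w' = (1 / s) \<cdot>\<^sub>v t"
      have w': "w' \<in> carrier_vec n" "sqnorm w' = 1" using normalize_vec[OF t] unfolding w'_def s_def by auto
      have "adj X *\<^sub>v w' = (1/s) \<cdot>\<^sub>v (\<nu> \<cdot>\<^sub>v v)" unfolding w'_def t_def
        using mult_mat_vec[OF aX, of "X *\<^sub>v v" "1/s"] X v ev' by simp
      also have "\<dots> = (\<nu>/s) \<cdot>\<^sub>v v" by (simp add: smult_smult_assoc)
      finally have 1: "adj X *\<^sub>v w' = (\<nu>/s) \<cdot>\<^sub>v v" .
      have "s \<cdot>\<^sub>v w' = t" unfolding w'_def using s0 by (simp add: smult_smult_assoc)
      then have 2: "X *\<^sub>v v = s \<cdot>\<^sub>v w'" unfolding t_def by simp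
      show ?thesis using w' v 1 2 by blast
    next
      case True
      have "X *\<^sub>v v = 0 \<cdot>\<^sub>v w" "adj X *\<^sub>v w = 0 \<cdot>\<^sub>v v" using True Z w v by auto
      then show ?thesis using w v by blast
    qed
  qed
qed




lemma conj_back: assumes U: "unitary_mat n U" and V: "unitary_mat m V" and X: "X \<in> carrier_mat n m"
  shows "U * (adj U * X * V) * adj V = X"
proof -
  have Uc: "U \<in> carrier_mat n n" and Vc: "V \<in> carrier_mat m m" using U V unitary_carrier by auto
  have aU: "adj U \<in> carrier_mat n n" using Uc by simp
  have aV: "adj V \<in> carrier_mat m m" using Vc by simp
  have "adj U * X * V = adj U * (X * V)" using assoc_mult_mat[OF aU X Vc] .
  then have "U * (adj U * X * V) = U * adj U * (X * V)"
    using assoc_mult_mat[OF Uc aU mult_carrier_mat[OF X Vc]] by simp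
  also have "\<dots> = X * V" using unitary_right[OF U] X Vc by simp
  finally have "U * (adj U * X * V) * adj V = X * V * adj V" by simp
  also have "\<dots> = X * (V * adj V)" using assoc_mult_mat[OF X Vc aV] .
  also have "\<dots> = X" using unitary_right[OF V] X by simp
  finally show ?thesis .
qed

lemma svd: "n \<le> m \<Longrightarrow> X \<in> carrier_mat n m \<Longrightarrow> \<exists>U D V. unitary_mat n U \<and> unitary_mat m V \<and>
   D \<in> carrier_mat n m \<and> (\<forall>i<n. \<forall>j<m. i \<noteq> j \<longrightarrow> D $$ (i,j) = 0) \<and> X = U * D * adj V"
proof (induction n arbitrary: m X)
  case 0
  have "X = 1\<^sub>m 0 * 0\<^sub>m 0 m * adj (1\<^sub>m m)" using 0 by (intro eq_matI) auto
  then show ?case using unitary_one[of 0] unitary_one[of m] by (intro exI[of _ "1\<^sub>m 0"] exI[of _ "0\<^sub>m 0 m"] exI[of _ "1\<^sub>m m"]) auto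
next
  case (Suc n)
  then obtain m' where mm: "m = Suc m'" by (cases m) auto
  have X: "X \<in> carrier_mat (Suc n) m" using Suc by auto
  obtain w v a b where w: "w \<in> carrier_vec (Suc n)" "sqnorm w = 1" and v: "v \<in> carrier_vec m" "sqnorm v = 1"
    and Xv: "X *\<^sub>v v = a \<cdot>\<^sub>v w" and Xw: "adj X *\<^sub>v w = b \<cdot>\<^sub>v v"
    using pair_lemma[OF X] mm by blast
  obtain U0 where U0: "unitary_mat (Suc n) U0" and U0w: "\<forall>i<Suc n. U0 $$ (i,0) = w $ i"
    using unit_completion[OF w] by blast
  obtain V0 where V0: "unitary_mat m V0" and V0v: "\<forall>i<m. V0 $$ (i,0) = v $ i"
    using unit_completion[OF v] by blast
  have U0c: "U0 \<in> carrier_mat (Suc n) (Suc n)" and V0c: "V0 \<in> carrier_mat m m"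
    using U0 V0 unitary_carrier by auto
  define Y where "Y = adj U0 * X * V0"
  have Yc: "Y \<in> carrier_mat (Suc n) m" unfolding Y_def using U0c V0c X by auto
  have XV: "\<And>r. r < Suc n \<Longrightarrow> (X * V0) $$ (r,0) = a * U0 $$ (r,0)"
  proof -
    fix r assume r: "r < Suc n"
    have "(X * V0) $$ (r,0) = (\<Sum>s<m. X $$ (r,s) * v $ s)"
      using r mm V0v by (simp add: mult_idx[OF X V0c] del: index_mult_mat(1))
    also have "\<dots> = (X *\<^sub>v v) $ r" using r X v by (simp add: scalar_prod_def atLeast0LessThan)
    also have "\<dots> = a * U0 $$ (r,0)" using Xv r w U0w by simp
    finally show "(X * V0) $$ (r,0) = a * U0 $$ (r,0)" .
  qed
  have UX: "\<And>s. s < m \<Longrightarrow> (adj U0 * X) $$ (0,s) = cnj b * cnj (V0 $$ (s,0))"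
  proof -
    fix s assume s: "s < m"
    have "(adj U0 * X) $$ (0,s) = (\<Sum>r<Suc n. cnj (w $ r) * X $$ (r,s))"
      using s U0w U0c by (simp add: mult_idx[OF adj_carrier[OF U0c] X] del: index_mult_mat(1))
    also have "\<dots> = cnj ((adj X *\<^sub>v w) $ s)" using s X w
      by (simp add: scalar_prod_def atLeast0LessThan cnj_sum mult.commute)
    also have "\<dots> = cnj b * cnj (V0 $$ (s,0))" using Xw s v V0v by simp
    finally show "(adj U0 * X) $$ (0,s) = cnj b * cnj (V0 $$ (s,0))" .
  qed
  have Yi0: "\<And>i. i < Suc n \<Longrightarrow> Y $$ (i,0) = a * 1\<^sub>m (Suc n) $$ (i,0)"
  proof -
    fix i assume i: "i < Suc n"
    have "Y = adj U0 * (X * V0)" unfolding Y_def using U0c X V0c by (simp add: assoc_mult_mat[of _ "Suc n" "Suc n" _ m _ m])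
    then have "Y $$ (i,0) = (\<Sum>r<Suc n. cnj (U0 $$ (r,i)) * (X * V0) $$ (r,0))"
      using i U0c X V0c mm by (simp add: mult_idx[of _ "Suc n" "Suc n" _ m] del: index_mult_mat(1))
    also have "\<dots> = a * (\<Sum>r<Suc n. cnj (U0 $$ (r,i)) * U0 $$ (r,0))"
      by (simp add: XV sum_distrib_left mult_ac del: sum.lessThan_Suc)
    also have "(\<Sum>r<Suc n. cnj (U0 $$ (r,i)) * U0 $$ (r,0)) = (adj U0 * U0) $$ (i,0)"
      using i U0c by (simp add: mult_idx[of _ "Suc n" "Suc n" _ "Suc n"] del: index_mult_mat(1))
    finally show "Y $$ (i,0) = a * 1\<^sub>m (Suc n) $$ (i,0)" using unitary_left[OF U0] by simp
  qed
  have Y0j: "\<And>j. j < m \<Longrightarrow> Y $$ (0,j) = cnj b * 1\<^sub>m m $$ (0,j)"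
  proof -
    fix j assume j: "j < m"
    have "Y $$ (0,j) = (\<Sum>s<m. (adj U0 * X) $$ (0,s) * V0 $$ (s,j))"
      unfolding Y_def by (rule mult_idx[OF mult_carrier_mat[OF adj_carrier[OF U0c] X] V0c]) (use j in auto)
    also have "\<dots> = cnj b * (\<Sum>s<m. cnj (V0 $$ (s,0)) * V0 $$ (s,j))"
      by (simp add: UX sum_distrib_left mult_ac del: sum.lessThan_Suc)
    also have "(\<Sum>s<m. cnj (V0 $$ (s,0)) * V0 $$ (s,j)) = (adj V0 * V0) $$ (0,j)"
      using j V0c mm by (simp add: mult_idx[of _ m m _ m] del: index_mult_mat(1))
    finally show "Y $$ (0,j) = cnj b * 1\<^sub>m m $$ (0,j)" using unitary_left[OF V0] by simp
  qed
  define Y' where "Y' = mat n m' (\<lambda>(i,j). Y $$ (Suc i, Suc j))"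
  have Y'c: "Y' \<in> carrier_mat n m'" unfolding Y'_def by auto
  have Yext: "Y = ext a Y'"
  proof (rule eq_matI)
    fix i j assume "i < dim_row (ext a Y')" "j < dim_col (ext a Y')"
    then have i: "i < Suc n" and j: "j < m" using Y'c mm by (auto simp: ext_def)
    show "Y $$ (i,j) = ext a Y' $$ (i,j)"
    proof (cases "i = 0")
      case True then show ?thesis using Y0j[OF j] Yi0[of 0] i j Y'c mm by (cases j) (auto simp: ext_def)
    next
      case False
      then show ?thesis using Yi0[OF i] i j Y'c mm by (cases j; cases i) (auto simp: ext_def Y'_def)
    qed
  qed (insert Yc Y'c mm, auto simp: ext_def)
  have "n \<le> m'" using Suc mm by simp
  from Suc.IH[OF this Y'c] obtain U' D' V' where U': "unitary_mat n U'" and V': "unitary_mat m' V'"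
    and D'c: "D' \<in> carrier_mat n m'" and D'd: "\<forall>i<n. \<forall>j<m'. i \<noteq> j \<longrightarrow> D' $$ (i,j) = 0"
    and Y'e: "Y' = U' * D' * adj V'" by blast
  have U'c: "U' \<in> carrier_mat n n" and V'c: "V' \<in> carrier_mat m' m'" using U' V' unitary_carrier by auto
  have Yfac: "Y = ext 1 U' * ext a D' * adj (ext 1 V')"
    unfolding Yext Y'e ext_adj using U'c D'c V'c
    by (simp add: ext_mult[of U' n n D' m'] ext_mult[of "U' * D'" n m' "adj V'" m'])
  define U where "U = U0 * ext 1 U'"
  define V where "V = V0 * ext 1 V'"
  define D where "D = ext a D'"
  have Uu: "unitary_mat (Suc n) U" unfolding U_def by (rule unitary_mult[OF U0 unitary_ext[OF U']])
  have Vu: "unitary_mat m V" unfolding V_def mm by (rule unitary_mult[OF V0[unfolded mm] unitary_ext[OF V']])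
  have Dc: "D \<in> carrier_mat (Suc n) m" unfolding D_def mm using ext_carrier[OF D'c] .
  have Dd: "\<forall>i<Suc n. \<forall>j<m. i \<noteq> j \<longrightarrow> D $$ (i,j) = 0"
  proof (intro allI impI)
    fix i j assume ij: "i < Suc n" "j < m" "i \<noteq> j"
    then show "D $$ (i,j) = 0" using D'd D'c mm unfolding D_def
      by (cases i; cases j) (auto simp: ext_def)
  qed
  have e1c: "ext 1 U' \<in> carrier_mat (Suc n) (Suc n)" using ext_carrier[OF U'c] .
  have e2c: "ext 1 V' \<in> carrier_mat m m" using ext_carrier[OF V'c] mm by simp
  have "X = U0 * Y * adj V0" unfolding Y_def using conj_back[OF U0 V0 X] by simp
  also have "\<dots> = U0 * (ext 1 U' * D * adj (ext 1 V')) * adj V0"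
    using Yfac unfolding D_def by simp
  also have "\<dots> = U * D * adj V"
  proof -
    define E where "E = ext 1 U'"
    define E2 where "E2 = ext 1 V'"
    have Ec: "E \<in> carrier_mat (Suc n) (Suc n)" using e1c unfolding E_def .
    have aE2: "adj E2 \<in> carrier_mat m m" using e2c unfolding E2_def by simp
    have aV0: "adj V0 \<in> carrier_mat m m" using V0c by simp
    have EDc: "E * D \<in> carrier_mat (Suc n) m" using Ec Dc by simp
    have "U0 * (E * D * adj E2) * adj V0 = U0 * (E * D) * adj E2 * adj V0"
      using assoc_mult_mat[OF U0c EDc aE2] by simp
    also have "U0 * (E * D) = U0 * E * D" using assoc_mult_mat[OF U0c Ec Dc] by simp
    also have "U0 * E * D * adj E2 * adj V0 = U0 * E * D * (adj E2 * adj V0)"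
      using assoc_mult_mat[OF mult_carrier_mat[OF mult_carrier_mat[OF U0c Ec] Dc] aE2 aV0] .
    also have "adj E2 * adj V0 = adj (V0 * E2)" using adj_mult[OF V0c, of E2 m] e2c unfolding E2_def by simp
    finally show ?thesis unfolding U_def V_def E_def E2_def .
  qed
  finally show ?case using Uu Vu Dc Dd by blast
qed




lemma unitary_cancel1: "unitary_mat n V \<Longrightarrow> X \<in> carrier_mat n k \<Longrightarrow> adj V * (V * X) = X"
  using unitary_left[of n V] unitary_carrier[of n V]
  by (metis adj_carrier assoc_mult_mat left_mult_one_mat)
lemma unitary_cancel2: "unitary_mat n V \<Longrightarrow> X \<in> carrier_mat n k \<Longrightarrow> V * (adj V * X) = X"
  using unitary_right[of n V] unitary_carrier[of n V]
  by (metis adj_carrier assoc_mult_mat left_mult_one_mat)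

lemma cnj_sq: "z * cnj z = (complex_of_real (cmod z))\<^sup>2"
  using complex_norm_square[of z] by simp

lemma diag_sq: assumes D: "D \<in> carrier_mat n m" and dg: "\<forall>i<n. \<forall>j<m. i \<noteq> j \<longrightarrow> D $$ (i,j) = 0"
  and i: "i < n" and j: "j < n" and nm: "n \<le> m"
  shows "(D * adj D) $$ (i,j) = (if i = j then complex_of_real ((cmod (D $$ (i,i)))\<^sup>2) else 0)"
proof -
  have "(D * adj D) $$ (i,j) = (\<Sum>k<m. D $$ (i,k) * cnj (D $$ (j,k)))"
    using i j D by (simp add: mult_idx[OF D adj_carrier[OF D]] del: index_mult_mat(1))
  also have "\<dots> = (\<Sum>k<m. if k = i then (if i = j then D $$ (i,i) * cnj (D $$ (i,i)) else 0) else 0)"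
    using dg i j by (intro sum.cong) auto
  also have "\<dots> = (if i = j then complex_of_real ((cmod (D $$ (i,i)))\<^sup>2) else 0)"
    using i nm by (simp add: cnj_sq)
  finally show ?thesis .
qed

lemma diag_sq2: assumes D: "D \<in> carrier_mat n n" and dg: "\<forall>i<n. \<forall>j<n. i \<noteq> j \<longrightarrow> D $$ (i,j) = 0"
  shows "adj D * D = D * adj D"
proof (rule eq_matI)
  fix i j assume "i < dim_row (D * adj D)" "j < dim_col (D * adj D)"
  then have i: "i < n" and j: "j < n" using D by auto
  have "(adj D * D) $$ (i,j) = (\<Sum>k<n. cnj (D $$ (k,i)) * D $$ (k,j))"
    using i j D by (simp add: mult_idx[OF adj_carrier[OF D] D] del: index_mult_mat(1))
  also have "\<dots> = (\<Sum>k<n. if k = i then (if i = j then D $$ (i,i) * cnj (D $$ (i,i)) else 0) else 0)"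
    using dg i j by (intro sum.cong) auto
  also have "\<dots> = (D * adj D) $$ (i,j)"
    using i j by (simp add: diag_sq[OF D dg i j] cnj_sq)
  finally show "(adj D * D) $$ (i,j) = (D * adj D) $$ (i,j)" .
qed (insert D, auto)

lemma unitary_sim: assumes C: "C \<in> carrier_mat n n"
  shows "\<exists>Q. unitary_mat n Q \<and> C * adj C = Q * (adj C * C) * adj Q"
proof -
  obtain U D V where U: "unitary_mat n U" and V: "unitary_mat n V" and Dc: "D \<in> carrier_mat n n"
    and dg: "\<forall>i<n. \<forall>j<n. i \<noteq> j \<longrightarrow> D $$ (i,j) = 0" and Ce: "C = U * D * adj V"
    using svd[OF le_refl C] by blast
  have Uc: "U \<in> carrier_mat n n" and Vc: "V \<in> carrier_mat n n" using U V unitary_carrier by auto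
  note cc = Uc Vc Dc adj_carrier[OF Uc] adj_carrier[OF Vc] adj_carrier[OF Dc]
  have aC: "adj C = V * adj D * adj U" unfolding Ce using cc
    by (simp add: mult_carrier_mat[of _ _ n] mult_carrier_mat[of _ _ m] adj_mult[of _ n n _ n] assoc_mult_mat[of _ n n _ n _ n])
  have 1: "C * adj C = U * (D * adj D * adj U)" unfolding aC unfolding Ce using cc
    by (simp add: unitary_cancel1[OF V, of _ n] unitary_cancel1[OF V, of _ m] mult_carrier_mat[of _ _ n] mult_carrier_mat[of _ _ m] assoc_mult_mat[of _ n n _ n _ n])
  have 2: "adj C * C = V * (adj D * D * adj V)" unfolding aC unfolding Ce using cc
    by (simp add: unitary_cancel1[OF U, of _ n] mult_carrier_mat[of _ _ n] assoc_mult_mat[of _ n n _ n _ n])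
  define Q where "Q = U * adj V"
  have Qu: "unitary_mat n Q" unfolding Q_def by (rule unitary_mult[OF U unitary_adj[OF V]])
  have aQ: "adj Q = V * adj U" unfolding Q_def using cc by (simp add: mult_carrier_mat[of _ _ n] mult_carrier_mat[of _ _ m] adj_mult[of _ n n _ n] assoc_mult_mat[of _ n n _ n _ n])
  have "Q * (adj C * C) * adj Q = U * (adj D * D * adj U)" unfolding 2 aQ unfolding Q_def using cc
    by (simp add: unitary_cancel1[OF V, of _ n] unitary_cancel1[OF V, of _ m] mult_carrier_mat[of _ _ n] mult_carrier_mat[of _ _ m] assoc_mult_mat[of _ n n _ n _ n])
  also have "\<dots> = C * adj C" unfolding 1 diag_sq2[OF Dc dg] ..
  finally show ?thesis using Qu by metis
qed

lemma sqrt_factor: assumes M: "M \<in> carrier_mat n m" and nm: "n \<le> m"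
  shows "\<exists>R. R \<in> carrier_mat n n \<and> M * adj M = R * adj R"
proof -
  obtain U D V where U: "unitary_mat n U" and V: "unitary_mat m V" and Dc: "D \<in> carrier_mat n m"
    and dg: "\<forall>i<n. \<forall>j<m. i \<noteq> j \<longrightarrow> D $$ (i,j) = 0" and Me: "M = U * D * adj V"
    using svd[OF nm M] by blast
  have Uc: "U \<in> carrier_mat n n" and Vc: "V \<in> carrier_mat m m" using U V unitary_carrier by auto
  note cc = Uc Vc Dc adj_carrier[OF Uc] adj_carrier[OF Vc] adj_carrier[OF Dc]
  have aM: "adj M = V * adj D * adj U" unfolding Me using cc
    by (simp add: mult_carrier_mat[of _ _ n] mult_carrier_mat[of _ _ m] adj_mult[of _ n n _ m] adj_mult[of _ n m _ m] assoc_mult_mat[of _ n n _ n _ n] assoc_mult_mat[of _ n n _ n _ m] assoc_mult_mat[of _ n n _ m _ n] assoc_mult_mat[of _ n n _ m _ m] assoc_mult_mat[of _ n m _ n _ n] assoc_mult_mat[of _ n m _ n _ m] assoc_mult_mat[of _ n m _ m _ n] assoc_mult_mat[of _ n m _ m _ m] assoc_mult_mat[of _ m n _ n _ n] assoc_mult_mat[of _ m n _ n _ m] assoc_mult_mat[of _ m n _ m _ n] assoc_mult_mat[of _ m n _ m _ m] assoc_mult_mat[of _ m m _ n _ n] assoc_mult_mat[of _ m m _ n _ m] assoc_mult_mat[of _ m m _ m _ n] assoc_mult_mat[of _ m m _ m _ m])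
  have 1: "M * adj M = U * (D * adj D * adj U)" unfolding aM unfolding Me using cc
    by (simp add: unitary_cancel1[OF V, of _ n] unitary_cancel1[OF V, of _ m] mult_carrier_mat[of _ _ n] mult_carrier_mat[of _ _ m] assoc_mult_mat[of _ n n _ n _ n] assoc_mult_mat[of _ n n _ n _ m] assoc_mult_mat[of _ n n _ m _ n] assoc_mult_mat[of _ n n _ m _ m] assoc_mult_mat[of _ n m _ n _ n] assoc_mult_mat[of _ n m _ n _ m] assoc_mult_mat[of _ n m _ m _ n] assoc_mult_mat[of _ n m _ m _ m] assoc_mult_mat[of _ m n _ n _ n] assoc_mult_mat[of _ m n _ n _ m] assoc_mult_mat[of _ m n _ m _ n] assoc_mult_mat[of _ m n _ m _ m] assoc_mult_mat[of _ m m _ n _ n] assoc_mult_mat[of _ m m _ n _ m] assoc_mult_mat[of _ m m _ m _ n] assoc_mult_mat[of _ m m _ m _ m])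
  define Dr where "Dr = mat n n (\<lambda>(i,j). if i = j then complex_of_real (cmod (D $$ (i,i))) else 0)"
  have Drc: "Dr \<in> carrier_mat n n" unfolding Dr_def by auto
  have "Dr * adj Dr = D * adj D"
  proof (rule eq_matI)
    fix i j assume "i < dim_row (D * adj D)" "j < dim_col (D * adj D)"
    then have i: "i < n" and j: "j < n" using Dc by auto
    have "(Dr * adj Dr) $$ (i,j) = (\<Sum>k<n. Dr $$ (i,k) * cnj (Dr $$ (j,k)))"
      using i j Drc by (simp add: mult_idx[OF Drc adj_carrier[OF Drc]] del: index_mult_mat(1))
    also have "\<dots> = (\<Sum>k<n. if k = i then (if i = j then complex_of_real ((cmod (D $$ (i,i)))\<^sup>2) else 0) else 0)"
      using i j by (intro sum.cong) (auto simp: Dr_def power2_eq_square)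
    also have "\<dots> = (D * adj D) $$ (i,j)" using i j by (simp add: diag_sq[OF Dc dg i j nm])
    finally show "(Dr * adj Dr) $$ (i,j) = (D * adj D) $$ (i,j)" .
  qed (insert Dc Drc, auto)
  moreover have "(U * Dr) * adj (U * Dr) = U * (Dr * adj Dr * adj U)"
    using cc Drc by (simp add: mult_carrier_mat[of _ _ n] mult_carrier_mat[of _ _ m] adj_mult[of _ n n _ n] assoc_mult_mat[of _ n n _ n _ n] assoc_mult_mat[of _ n n _ n _ m] assoc_mult_mat[of _ n n _ m _ n] assoc_mult_mat[of _ n n _ m _ m] assoc_mult_mat[of _ n m _ n _ n] assoc_mult_mat[of _ n m _ n _ m] assoc_mult_mat[of _ n m _ m _ n] assoc_mult_mat[of _ n m _ m _ m] assoc_mult_mat[of _ m n _ n _ n] assoc_mult_mat[of _ m n _ n _ m] assoc_mult_mat[of _ m n _ m _ n] assoc_mult_mat[of _ m n _ m _ m] assoc_mult_mat[of _ m m _ n _ n] assoc_mult_mat[of _ m m _ n _ m] assoc_mult_mat[of _ m m _ m _ n] assoc_mult_mat[of _ m m _ m _ m])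
  ultimately have "M * adj M = (U * Dr) * adj (U * Dr)" using 1 by simp
  then show ?thesis using Uc Drc by (intro exI[of _ "U * Dr"]) auto
qed




lemma unitary_entry_le: assumes U: "unitary_mat d U" and i: "i < d" and j: "j < d"
  shows "cmod (U $$ (i,j)) \<le> 1"
proof -
  have Uc: "U \<in> carrier_mat d d" using U unitary_carrier by auto
  have "complex_of_real 1 = (adj U * U) $$ (j,j)" using unitary_left[OF U] j by simp
  also have "\<dots> = (\<Sum>r<d. cnj (U $$ (r,j)) * U $$ (r,j))"
    using j Uc by (simp add: mult_idx[OF adj_carrier[OF Uc] Uc] del: index_mult_mat(1))
  also have "\<dots> = complex_of_real (\<Sum>r<d. (cmod (U $$ (r,j)))\<^sup>2)"
    by (simp add: of_real_sum complex_norm_square mult.commute del: of_real_power)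
  finally have e: "(\<Sum>r<d. (cmod (U $$ (r,j)))\<^sup>2) = 1" by (metis of_real_eq_iff)
  have "(cmod (U $$ (i,j)))\<^sup>2 \<le> (\<Sum>r<d. (cmod (U $$ (r,j)))\<^sup>2)"
    using i by (intro member_le_sum) auto
  then have "(cmod (U $$ (i,j)))\<^sup>2 \<le> 1\<^sup>2" using e by simp
  then show ?thesis by (rule power2_le_imp_le) simp
qed

lemma ptr_bound: assumes U: "unitary_mat d U" and X: "X \<in> carrier_mat d d"
  shows "cmod (ptr (U * X)) \<le> (\<Sum>i<d. \<Sum>k<d. cmod (X $$ (k,i)))"
proof -
  have Uc: "U \<in> carrier_mat d d" using U unitary_carrier by auto
  have "cmod (ptr (U * X)) = cmod (\<Sum>i<d. \<Sum>k<d. U $$ (i,k) * X $$ (k,i))" by (simp add: ptr_mult[OF Uc X])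
  also have "\<dots> \<le> (\<Sum>i<d. \<Sum>k<d. cmod (U $$ (i,k) * X $$ (k,i)))"
    by (rule order_trans[OF norm_sum sum_mono]) (rule norm_sum)
  also have "\<dots> \<le> (\<Sum>i<d. \<Sum>k<d. cmod (X $$ (k,i)))"
  proof (intro sum_mono)
    fix i k assume "i \<in> {..<d}" "k \<in> {..<d}"
    then show "cmod (U $$ (i,k) * X $$ (k,i)) \<le> cmod (X $$ (k,i))"
      using unitary_entry_le[OF U, of i k] by (simp add: norm_mult mult_left_le_one_le)
  qed
  finally show ?thesis .
qed

lemma W_set_conj: assumes W: "W \<in> W_set d \<Lambda>" and Q: "unitary_mat d Q"
  shows "Q * W * adj Q \<in> W_set d \<Lambda>"
proof -
  have Wu: "unitary_mat d W" and cp: "char_poly W = (\<Prod>x\<in>#\<Lambda>. [:-x, 1:])" using W unfolding W_set_def by auto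
  have Qc: "Q \<in> carrier_mat d d" and Wc: "W \<in> carrier_mat d d" using Q Wu unitary_carrier by auto
  have u: "unitary_mat d (Q * W * adj Q)" by (rule unitary_mult[OF unitary_mult[OF Q Wu] unitary_adj[OF Q]])
  have "similar_mat (Q * W * adj Q) W"
    by (rule similar_matI[of _ _ Q "adj Q" d]) (insert Qc Wc unitary_right[OF Q] unitary_left[OF Q], auto)
  then have "char_poly (Q * W * adj Q) = char_poly W" by (rule char_poly_similar)
  then show ?thesis using u cp unfolding W_set_def by auto
qed

lemma W_set_carrier: "W \<in> W_set d \<Lambda> \<Longrightarrow> W \<in> carrier_mat d d"
  unfolding W_set_def using unitary_carrier by auto

lemma W_set_unitary: "W \<in> W_set d \<Lambda> \<Longrightarrow> unitary_mat d W"
  unfolding W_set_def by auto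

lemma W_set_nonempty: assumes "is_spectrum d \<Lambda>" shows "W_set d \<Lambda> \<noteq> {}"
proof -
  obtain xs where xs: "mset xs = \<Lambda>" using ex_mset by blast
  have len: "length xs = d" using assms xs unfolding is_spectrum_def by (metis size_mset)
  have unim: "\<And>i. i < d \<Longrightarrow> cmod (xs ! i) = 1" using assms xs len unfolding is_spectrum_def
    by (metis nth_mem set_mset_mset)
  define W where "W = mat d d (\<lambda>(i,j). if i = j then xs ! i else 0)"
  have Wc: "W \<in> carrier_mat d d" unfolding W_def by auto
  have ut: "upper_triangular W" unfolding W_def upper_triangular_def by auto
  have dg: "diag_mat W = xs" unfolding diag_mat_def W_def using len by (intro nth_equalityI) auto
  have cp: "char_poly W = (\<Prod>x\<in>#\<Lambda>. [:-x, 1:])"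
    unfolding char_poly_upper_triangular[OF Wc ut] dg xs[symmetric]
    by (simp add: prod_mset_prod_list[symmetric])
  have "adj W * W = 1\<^sub>m d"
  proof (rule eq_matI)
    fix i j assume "i < dim_row (1\<^sub>m d)" "j < dim_col (1\<^sub>m d)"
    then have i: "i < d" and j: "j < d" by auto
    have "(adj W * W) $$ (i,j) = (\<Sum>k<d. cnj (W $$ (k,i)) * W $$ (k,j))"
      using i j Wc by (simp add: mult_idx[OF adj_carrier[OF Wc] Wc] del: index_mult_mat(1))
    also have "\<dots> = (\<Sum>k<d. if k = i then (if i = j then cnj (xs ! i) * xs ! i else 0) else 0)"
      using i j by (intro sum.cong) (auto simp: W_def)
    also have "\<dots> = 1\<^sub>m d $$ (i,j)" using i j unim[OF i]
      by (cases "i = j") (auto simp: mult.commute[of "cnj _"] cnj_sq)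
    finally show "(adj W * W) $$ (i,j) = 1\<^sub>m d $$ (i,j)" .
  qed (insert Wc, auto)
  then have "W \<in> W_set d \<Lambda>" using cp Wc unfolding W_set_def unitary_mat_def by auto
  then show ?thesis by auto
qed




definition Mv :: "nat \<Rightarrow> nat \<Rightarrow> complex vec \<Rightarrow> complex mat" where
  "Mv dA dB \<phi> = mat dA dB (\<lambda>(i,j). \<phi> $ (i*dB+j))"

lemma Mv_carrier[simp]: "Mv dA dB \<phi> \<in> carrier_mat dA dB" unfolding Mv_def by auto
lemma Mv_dims[simp]: "dim_row (Mv dA dB \<phi>) = dA" "dim_col (Mv dA dB \<phi>) = dB" unfolding Mv_def by auto

lemma idx_lt: "i < (a::nat) \<Longrightarrow> j < b \<Longrightarrow> i*b+j < a*b"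
proof -
  assume "i < a" "j < b"
  then have "i*b + j < i*b + b" by simp
  also have "\<dots> = (i+1)*b" by simp
  also have "\<dots> \<le> a*b" using \<open>i < a\<close> by (intro mult_right_mono) auto
  finally show ?thesis .
qed

lemma idx_div[simp]: "j < (b::nat) \<Longrightarrow> (i*b+j) div b = i" by simp
lemma idx_mod[simp]: "j < (b::nat) \<Longrightarrow> (i*b+j) mod b = j" by simp

lemma tr_idx: assumes A: "A \<in> carrier_mat dA dA" and i: "i < dA" "i' < dA" and j: "j < dB" "j' < dB"
  shows "tensor_id_right dB A $$ (i*dB+j, i'*dB+j') = (if j = j' then A $$ (i,i') else 0)"
  using A i j idx_lt[OF i(1) j(1)] idx_lt[OF i(2) j(2)] unfolding tensor_id_right_def by auto

lemma tl_idx: assumes B: "B \<in> carrier_mat dB dB" and i: "i < dA" "i' < dA" and j: "j < dB" "j' < dB"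
  shows "tensor_id_left dA B $$ (i*dB+j, i'*dB+j') = (if i = i' then B $$ (j,j') else 0)"
  using B i j idx_lt[OF i(1) j(1)] idx_lt[OF i(2) j(2)] unfolding tensor_id_left_def by auto

lemma Mv_right: assumes A: "A \<in> carrier_mat dA dA" and phi: "\<phi> \<in> carrier_vec (dA*dB)"
  shows "Mv dA dB (tensor_id_right dB A *\<^sub>v \<phi>) = A * Mv dA dB \<phi>"
proof (rule eq_matI)
  fix i j assume "i < dim_row (A * Mv dA dB \<phi>)" "j < dim_col (A * Mv dA dB \<phi>)"
  then have i: "i < dA" and j: "j < dB" using A by auto
  have T: "tensor_id_right dB A \<in> carrier_mat (dA*dB) (dA*dB)" using A unfolding tensor_id_right_def by auto
  have r: "i*dB+j < dA*dB" by (rule idx_lt[OF i j])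
  have "(tensor_id_right dB A *\<^sub>v \<phi>) $ (i*dB+j) = (\<Sum>c<dA*dB. tensor_id_right dB A $$ (i*dB+j, c) * \<phi> $ c)"
    using r T phi by (simp add: scalar_prod_def atLeast0LessThan)
  also have "\<dots> = (\<Sum>i'<dA. \<Sum>j'<dB. tensor_id_right dB A $$ (i*dB+j, i'*dB+j') * \<phi> $ (i'*dB+j'))"
    by (rule sum_mult_split)
  also have "\<dots> = (\<Sum>i'<dA. \<Sum>j'<dB. if j' = j then A $$ (i,i') * \<phi> $ (i'*dB+j) else 0)"
    using i j A by (intro sum.cong refl) (auto simp: tr_idx)
  also have "\<dots> = (\<Sum>i'<dA. A $$ (i,i') * Mv dA dB \<phi> $$ (i',j))"
    using j by (simp add: Mv_def)
  also have "\<dots> = (A * Mv dA dB \<phi>) $$ (i,j)"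
    using i j by (simp add: mult_idx[OF A Mv_carrier] del: index_mult_mat(1))
  finally show "Mv dA dB (tensor_id_right dB A *\<^sub>v \<phi>) $$ (i,j) = (A * Mv dA dB \<phi>) $$ (i,j)"
    using i j by (simp add: Mv_def)
qed (insert A, auto simp: Mv_def)

lemma Mv_left: assumes B: "B \<in> carrier_mat dB dB" and phi: "\<phi> \<in> carrier_vec (dA*dB)"
  shows "Mv dA dB (tensor_id_left dA B *\<^sub>v \<phi>) = Mv dA dB \<phi> * transpose_mat B"
proof (rule eq_matI)
  fix i j assume "i < dim_row (Mv dA dB \<phi> * transpose_mat B)" "j < dim_col (Mv dA dB \<phi> * transpose_mat B)"
  then have i: "i < dA" and j: "j < dB" using B by auto
  have T: "tensor_id_left dA B \<in> carrier_mat (dA*dB) (dA*dB)" using B unfolding tensor_id_left_def by auto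
  have r: "i*dB+j < dA*dB" by (rule idx_lt[OF i j])
  have "(tensor_id_left dA B *\<^sub>v \<phi>) $ (i*dB+j) = (\<Sum>c<dA*dB. tensor_id_left dA B $$ (i*dB+j, c) * \<phi> $ c)"
    using r T phi by (simp add: scalar_prod_def atLeast0LessThan)
  also have "\<dots> = (\<Sum>i'<dA. \<Sum>j'<dB. tensor_id_left dA B $$ (i*dB+j, i'*dB+j') * \<phi> $ (i'*dB+j'))"
    by (rule sum_mult_split)
  also have "\<dots> = (\<Sum>i'<dA. if i' = i then (\<Sum>j'<dB. B $$ (j,j') * \<phi> $ (i*dB+j')) else 0)"
    using i j B by (intro sum.cong refl) (auto simp: tl_idx)
  also have "\<dots> = (\<Sum>j'<dB. Mv dA dB \<phi> $$ (i,j') * transpose_mat B $$ (j',j))"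
    using i j B by (auto simp: Mv_def mult.commute intro!: sum.cong)
  also have "\<dots> = (Mv dA dB \<phi> * transpose_mat B) $$ (i,j)"
    using i j B by (simp add: mult_idx[OF Mv_carrier, of "transpose_mat B" dB] del: index_mult_mat(1))
  finally show "Mv dA dB (tensor_id_left dA B *\<^sub>v \<phi>) $$ (i,j) = (Mv dA dB \<phi> * transpose_mat B) $$ (i,j)"
    using i j by (simp add: Mv_def)
qed (insert B, auto simp: Mv_def)

lemma Mv_idx: "i < dA \<Longrightarrow> j < dB \<Longrightarrow> Mv dA dB v $$ (i,j) = v $ (i*dB+j)"
  unfolding Mv_def by simp

lemma tr_carrier: "W \<in> carrier_mat dA dA \<Longrightarrow> tensor_id_right dB W \<in> carrier_mat (dA*dB) (dA*dB)"
  unfolding tensor_id_right_def carrier_mat_def by simp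

lemma tl_carrier: "B \<in> carrier_mat dB dB \<Longrightarrow> tensor_id_left dA B \<in> carrier_mat (dA*dB) (dA*dB)"
  unfolding tensor_id_left_def carrier_mat_def by simp

definition rho :: "nat \<Rightarrow> nat \<Rightarrow> complex vec \<Rightarrow> complex mat" where
  "rho dA dB \<phi> = Mv dA dB \<phi> * adj (Mv dA dB \<phi>)"

lemma rho_carrier[simp]: "rho dA dB \<phi> \<in> carrier_mat dA dA" unfolding rho_def
  by (rule mult_carrier_mat[OF Mv_carrier adj_carrier[OF Mv_carrier]])

lemma braket_rho: assumes W: "W \<in> carrier_mat dA dA" and phi: "\<phi> \<in> carrier_vec (dA*dB)"
  shows "braket \<phi> (tensor_id_right dB W *\<^sub>v \<phi>) = ptr (W * rho dA dB \<phi>)"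
proof -
  let ?M = "Mv dA dB \<phi>"
  let ?v = "tensor_id_right dB W *\<^sub>v \<phi>"
  have vc: "?v \<in> carrier_vec (dA*dB)" using mult_mat_vec_carrier[OF tr_carrier[OF W] phi] .
  have "braket \<phi> ?v = (\<Sum>r<dA*dB. cnj (\<phi> $ r) * ?v $ r)" using vc unfolding braket_def by (simp only: carrier_vec_def mem_Collect_eq)
  also have "\<dots> = (\<Sum>i<dA. \<Sum>j<dB. cnj (\<phi> $ (i*dB+j)) * ?v $ (i*dB+j))" by (rule sum_mult_split)
  also have "\<dots> = (\<Sum>i<dA. \<Sum>j<dB. cnj (?M $$ (i,j)) * Mv dA dB ?v $$ (i,j))"
    by (intro sum.cong refl) (simp only: Mv_idx lessThan_iff)
  also have "\<dots> = (\<Sum>i<dA. \<Sum>j<dB. (W * ?M) $$ (i,j) * adj ?M $$ (j,i))"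
    unfolding Mv_right[OF W phi] by (intro sum.cong refl) (simp add: mult.commute)
  also have "\<dots> = ptr ((W * ?M) * adj ?M)" using W by (simp add: ptr_mult[of _ dA dB])
  also have "(W * ?M) * adj ?M = W * rho dA dB \<phi>" unfolding rho_def using W by (simp add: assoc_mult_mat[of _ dA dA _ dB _ dA])
  finally show ?thesis .
qed

lemma sqnorm_rho: assumes phi: "\<phi> \<in> carrier_vec (dA*dB)"
  shows "complex_of_real (sqnorm \<phi>) = ptr (rho dA dB \<phi>)"
proof -
  have "complex_of_real (sqnorm \<phi>) = (\<Sum>r<dA*dB. \<phi> $ r * cnj (\<phi> $ r))" using phi by (simp add: sqnorm_cpx)
  also have "\<dots> = (\<Sum>i<dA. \<Sum>j<dB. \<phi> $ (i*dB+j) * cnj (\<phi> $ (i*dB+j)))" by (rule sum_mult_split)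
  also have "\<dots> = (\<Sum>i<dA. \<Sum>j<dB. Mv dA dB \<phi> $$ (i,j) * adj (Mv dA dB \<phi>) $$ (j,i))"
    by (intro sum.cong refl) (simp add: Mv_idx)
  also have "\<dots> = ptr (rho dA dB \<phi>)" unfolding rho_def by (simp add: ptr_mult[of _ dA dB])
  finally show ?thesis .
qed

lemma Mv_smult: "dim_vec \<phi> = dA*dB \<Longrightarrow> Mv dA dB (c \<cdot>\<^sub>v \<phi>) = c \<cdot>\<^sub>m Mv dA dB \<phi>"
  unfolding Mv_def by (rule eq_matI) (auto simp: idx_lt)




definition Fm :: "nat \<Rightarrow> complex multiset \<Rightarrow> complex mat \<Rightarrow> real" where
  "Fm d \<Lambda> X = (SUP W\<in>W_set d \<Lambda>. (cmod (ptr (W * X)))\<^sup>2)"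

lemma rho_dims[simp]: "dim_row (rho dA dB \<phi>) = dA" "dim_col (rho dA dB \<phi>) = dA"
  unfolding rho_def by simp_all

lemma F_eq: assumes phi: "\<phi> \<in> carrier_vec (dA*dB)" shows "F_fid dA dB \<Lambda> \<phi> = Fm dA \<Lambda> (rho dA dB \<phi>)"
  unfolding F_fid_def Fm_def
proof (intro SUP_cong refl)
  fix W assume "W \<in> W_set dA \<Lambda>"
  then show "(cmod (braket \<phi> (tensor_id_right dB W *\<^sub>v \<phi>)))\<^sup>2 = (cmod (ptr (W * rho dA dB \<phi>)))\<^sup>2"
    using braket_rho[OF W_set_carrier phi] by simp
qed

lemma Fm_bdd: assumes X: "X \<in> carrier_mat d d"
  shows "bdd_above ((\<lambda>W. (cmod (ptr (W * X)))\<^sup>2) ` W_set d \<Lambda>)"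
proof (rule bdd_aboveI2)
  fix W assume "W \<in> W_set d \<Lambda>"
  then have "cmod (ptr (W * X)) \<le> (\<Sum>i<d. \<Sum>k<d. cmod (X $$ (k,i)))"
    using ptr_bound[OF W_set_unitary X] by blast
  then show "(cmod (ptr (W * X)))\<^sup>2 \<le> (\<Sum>i<d. \<Sum>k<d. cmod (X $$ (k,i)))\<^sup>2"
    by (intro power_mono) auto
qed

lemma Fm_upper: "X \<in> carrier_mat d d \<Longrightarrow> W \<in> W_set d \<Lambda> \<Longrightarrow> (cmod (ptr (W * X)))\<^sup>2 \<le> Fm d \<Lambda> X"
  unfolding Fm_def by (rule cSUP_upper[OF _ Fm_bdd])

lemma Fm_least: "W_set d \<Lambda> \<noteq> {} \<Longrightarrow> (\<And>W. W \<in> W_set d \<Lambda> \<Longrightarrow> (cmod (ptr (W * X)))\<^sup>2 \<le> c) \<Longrightarrow> Fm d \<Lambda> X \<le> c"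
  unfolding Fm_def by (rule cSUP_least)

lemma Fm_nonneg: assumes "W_set d \<Lambda> \<noteq> {}" "X \<in> carrier_mat d d" shows "Fm d \<Lambda> X \<ge> 0"
proof -
  obtain W where "W \<in> W_set d \<Lambda>" using assms by auto
  then show ?thesis using Fm_upper[OF assms(2), of W] by (meson order_trans zero_le_power2)
qed

lemma rho_smult: assumes "dim_vec \<phi> = dA*dB"
  shows "rho dA dB (c \<cdot>\<^sub>v \<phi>) = (c * cnj c) \<cdot>\<^sub>m rho dA dB \<phi>"
proof (rule eq_matI)
  fix i j assume "i < dim_row ((c * cnj c) \<cdot>\<^sub>m rho dA dB \<phi>)" "j < dim_col ((c * cnj c) \<cdot>\<^sub>m rho dA dB \<phi>)"
  then have i: "i < dA" and j: "j < dA" by auto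
  show "rho dA dB (c \<cdot>\<^sub>v \<phi>) $$ (i,j) = ((c * cnj c) \<cdot>\<^sub>m rho dA dB \<phi>) $$ (i,j)"
    unfolding rho_def Mv_smult[OF assms] using i j
    by (simp add: mult_idx[OF Mv_carrier adj_carrier[OF Mv_carrier]] mult_idx[OF smult_carrier_mat[OF Mv_carrier] adj_carrier[OF smult_carrier_mat[OF Mv_carrier]]]
          sum_distrib_left mult_ac del: index_mult_mat(1))
qed auto

lemma ptr_smult: "W \<in> carrier_mat d d \<Longrightarrow> X \<in> carrier_mat d d \<Longrightarrow> ptr (W * (a \<cdot>\<^sub>m X)) = a * ptr (W * X)"
  by (simp add: ptr_mult[of _ d d] sum_distrib_left mult_ac)

lemma UP: assumes phi: "\<phi> \<in> carrier_vec (dA*dB)" and p: "sqnorm \<phi> > 0" and W: "W \<in> W_set dA \<Lambda>"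
  shows "cmod (ptr (W * rho dA dB \<phi>)) \<le> sqnorm \<phi> * sqrt (F_fid dA dB \<Lambda> ((1 / complex_of_real (sqrt (sqnorm \<phi>))) \<cdot>\<^sub>v \<phi>))"
proof -
  define p where "p = sqnorm \<phi>"
  define c where "c = 1 / complex_of_real (sqrt p)"
  define t where "t = cmod (ptr (W * rho dA dB \<phi>))"
  have p0: "p > 0" using p unfolding p_def .
  have ps: "c \<cdot>\<^sub>v \<phi> \<in> carrier_vec (dA*dB)" using phi by simp
  have cc: "c * cnj c = complex_of_real (1/p)" unfolding c_def using p0
    by (simp add: field_simps) (metis of_real_mult real_sqrt_mult_self abs_of_pos p0)
  have Wc: "W \<in> carrier_mat dA dA" using W_set_carrier[OF W] .
  have "ptr (W * rho dA dB (c \<cdot>\<^sub>v \<phi>)) = complex_of_real (1/p) * ptr (W * rho dA dB \<phi>)"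
    using phi by (simp add: rho_smult cc ptr_smult[OF Wc rho_carrier])
  then have "cmod (ptr (W * rho dA dB (c \<cdot>\<^sub>v \<phi>))) = (1/p) * t"
    unfolding t_def using p0 by (simp add: norm_mult norm_divide)
  then have "((1/p) * t)\<^sup>2 \<le> F_fid dA dB \<Lambda> (c \<cdot>\<^sub>v \<phi>)"
    using Fm_upper[OF rho_carrier W] F_eq[OF ps] by metis
  then have "(1/p) * t \<le> sqrt (F_fid dA dB \<Lambda> (c \<cdot>\<^sub>v \<phi>))" by (rule real_le_rsqrt)
  then have "t \<le> p * sqrt (F_fid dA dB \<Lambda> (c \<cdot>\<^sub>v \<phi>))" using p0 by (simp add: field_simps)
  then show ?thesis unfolding t_def p_def c_def .
qed

lemma rho_zero: assumes phi: "\<phi> \<in> carrier_vec (dA*dB)" and p: "sqnorm \<phi> = 0"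
  shows "rho dA dB \<phi> = 0\<^sub>m dA dA"
proof -
  have "Mv dA dB \<phi> = 0\<^sub>m dA dB"
    by (rule eq_matI) (use phi sqnorm_zero[OF p] idx_lt in \<open>auto simp: Mv_def\<close>)
  then show ?thesis unfolding rho_def by simp
qed

lemma ptr_lin: assumes Z: "Z \<in> carrier_mat m m" and fin: "finite K"
  and Y: "\<And>k. k \<in> K \<Longrightarrow> Y k \<in> carrier_mat m m"
  and S: "\<And>c d. c < m \<Longrightarrow> d < m \<Longrightarrow> (\<Sum>k\<in>K. Y k $$ (c,d)) = 1\<^sub>m m $$ (c,d)"
  shows "(\<Sum>k\<in>K. ptr (Z * Y k)) = ptr Z"
proof -
  have "(\<Sum>k\<in>K. ptr (Z * Y k)) = (\<Sum>k\<in>K. \<Sum>i<m. \<Sum>c<m. Z $$ (i,c) * Y k $$ (c,i))"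
    by (intro sum.cong refl) (simp add: ptr_mult[OF Z Y])
  also have "\<dots> = (\<Sum>i<m. \<Sum>k\<in>K. \<Sum>c<m. Z $$ (i,c) * Y k $$ (c,i))" by (rule sum.swap)
  also have "\<dots> = (\<Sum>i<m. \<Sum>c<m. \<Sum>k\<in>K. Z $$ (i,c) * Y k $$ (c,i))" by (intro sum.cong refl) (rule sum.swap)
  also have "\<dots> = (\<Sum>i<m. \<Sum>c<m. Z $$ (i,c) * 1\<^sub>m m $$ (c,i))"
    by (intro sum.cong refl) (simp add: sum_distrib_left[symmetric] S)
  also have "\<dots> = (\<Sum>i<m. Z $$ (i,i))"
    by (intro sum.cong refl) (simp add: sum.delta' if_distrib cong: if_cong)
  also have "\<dots> = ptr Z" unfolding ptr_def using Z by simp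
  finally show ?thesis .
qed

lemma sandwich: assumes W: "W \<in> carrier_mat n n" and X: "X \<in> carrier_mat n m" and Y: "Y \<in> carrier_mat m m"
  shows "ptr (W * (X * Y * adj X)) = ptr ((adj X * W * X) * Y)"
proof -
  have aX: "adj X \<in> carrier_mat m n" using X by simp
  have "W * (X * Y * adj X) = (W * (X * Y)) * adj X"
    using assoc_mult_mat[OF W mult_carrier_mat[OF X Y] aX] by simp
  then have "ptr (W * (X * Y * adj X)) = ptr (adj X * (W * (X * Y)))"
    using ptr_comm[OF mult_carrier_mat[OF W mult_carrier_mat[OF X Y]] aX] by simp
  also have "adj X * (W * (X * Y)) = adj X * W * X * Y"
    using W X Y aX by (simp add: assoc_mult_mat[of _ m n _ n _ m] assoc_mult_mat[of _ n n _ m _ m]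
        assoc_mult_mat[of _ m n _ m _ m] assoc_mult_mat[of _ m n _ n _ m])
  finally show ?thesis by simp
qed




lemma final_step:
  fixes p f :: "'k \<Rightarrow> real"
  assumes fin: "finite T" and p: "\<And>k. k \<in> T \<Longrightarrow> p k > 0" and s1: "(\<Sum>k\<in>T. p k) = 1"
    and f: "\<And>k. k \<in> T \<Longrightarrow> f k \<ge> 0" and F0: "F0 \<ge> 0"
    and le: "F0 \<le> (\<Sum>k\<in>T. p k * sqrt (f k))\<^sup>2"
  shows "(\<Sum>k\<in>T. p k * sqrt (f k)) \<ge> sqrt F0 \<and> (\<Sum>k\<in>T. p k * (1 - f k)) \<le> 1 - F0"
proof -
  define S where "S = (\<Sum>k\<in>T. p k * sqrt (f k))"
  have S0: "S \<ge> 0" unfolding S_def using p f by (intro sum_nonneg) (simp add: less_imp_le)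
  have 1: "sqrt F0 \<le> S" using le S0 unfolding S_def[symmetric] by (metis real_sqrt_abs real_sqrt_le_mono abs_of_nonneg)
  have "0 \<le> (\<Sum>k\<in>T. p k * (sqrt (f k) - S)\<^sup>2)" using p by (intro sum_nonneg mult_nonneg_nonneg) (auto intro: less_imp_le)
  also have "\<dots> = (\<Sum>k\<in>T. p k * f k) - 2 * S * S + S\<^sup>2 * (\<Sum>k\<in>T. p k)"
  proof -
    have "(\<Sum>k\<in>T. p k * (sqrt (f k) - S)\<^sup>2) = (\<Sum>k\<in>T. p k * f k - 2 * S * (p k * sqrt (f k)) + S\<^sup>2 * p k)"
      using f by (intro sum.cong refl) (simp add: power2_diff algebra_simps)
    also have "\<dots> = (\<Sum>k\<in>T. p k * f k) - 2 * S * S + S\<^sup>2 * (\<Sum>k\<in>T. p k)"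
      unfolding S_def by (simp add: sum.distrib sum_subtractf sum_distrib_left)
    finally show ?thesis .
  qed
  finally have 2: "S\<^sup>2 \<le> (\<Sum>k\<in>T. p k * f k)" using s1 by (simp add: power2_eq_square)
  have "(\<Sum>k\<in>T. p k * (1 - f k)) = 1 - (\<Sum>k\<in>T. p k * f k)"
    using s1 by (simp add: algebra_simps sum_subtractf)
  then have "(\<Sum>k\<in>T. p k * (1 - f k)) \<le> 1 - F0" using 2 le unfolding S_def by linarith
  then show ?thesis using 1 unfolding S_def by simp
qed

lemma sum_pos_filter: assumes "finite K" "\<And>k. k \<in> K \<Longrightarrow> p k \<ge> (0::real)"
  shows "(\<Sum>k\<in>{k\<in>K. p k > 0}. p k) = (\<Sum>k\<in>K. p k)"
proof -
  have "(\<Sum>k\<in>{k\<in>K. p k > 0}. p k) = (\<Sum>k\<in>K. if p k > 0 then p k else 0)"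
    using assms(1) by (rule sum.inter_filter)
  also have "\<dots> = (\<Sum>k\<in>K. p k)" using assms(2) by (intro sum.cong refl) force
  finally show ?thesis .
qed




lemma ptr_one: "X \<in> carrier_mat n n \<Longrightarrow> ptr (1\<^sub>m n * X) = ptr X" by simp

lemma sideB:
  assumes dims: "1 \<le> dA" "dA \<le> dB" and spec: "is_spectrum dA \<Lambda>"
    and psi: "\<psi> \<in> carrier_vec (dA * dB)" "sqnorm \<psi> = 1"
    and finL: "finite L" and B_dim: "\<And>l. l \<in> L \<Longrightarrow> B l \<in> carrier_mat dB dB"
    and B_complete: "\<And>i j. i < dB \<Longrightarrow> j < dB \<Longrightarrow> (\<Sum>l\<in>L. (adj (B l) * B l) $$ (i,j)) = 1\<^sub>m dB $$ (i,j)"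
  defines "q \<equiv> (\<lambda>l. sqnorm (tensor_id_left dA (B l) *\<^sub>v \<psi>))"
    and "\<phi>' \<equiv> (\<lambda>l. (1 / complex_of_real (sqrt (sqnorm (tensor_id_left dA (B l) *\<^sub>v \<psi>)))) \<cdot>\<^sub>v (tensor_id_left dA (B l) *\<^sub>v \<psi>))"
  shows "(\<Sum>l\<in>{l\<in>L. q l > 0}. q l * sqrt (F_fid dA dB \<Lambda> (\<phi>' l))) \<ge> sqrt (F_fid dA dB \<Lambda> \<psi>)
      \<and> (\<Sum>l\<in>{l\<in>L. q l > 0}. q l * E_ent dA dB \<Lambda> (\<phi>' l)) \<le> E_ent dA dB \<Lambda> \<psi>"
proof -
  define \<phi> where "\<phi> = (\<lambda>l. tensor_id_left dA (B l) *\<^sub>v \<psi>)"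
  have \<phi>c: "\<And>l. l \<in> L \<Longrightarrow> \<phi> l \<in> carrier_vec (dA*dB)"
    unfolding \<phi>_def using mult_mat_vec_carrier[OF tl_carrier[OF B_dim] psi(1)] by blast
  define M where "M = Mv dA dB \<psi>"
  have Mc: "M \<in> carrier_mat dA dB" unfolding M_def by simp
  have aM: "adj M \<in> carrier_mat dB dA" using Mc by simp
  define Y where "Y = (\<lambda>l. transpose_mat (B l) * adj (transpose_mat (B l)))"
  have BT: "\<And>l. l \<in> L \<Longrightarrow> transpose_mat (B l) \<in> carrier_mat dB dB" using B_dim by auto
  have Yc: "\<And>l. l \<in> L \<Longrightarrow> Y l \<in> carrier_mat dB dB" unfolding Y_def using BT by (meson adj_carrier mult_carrier_mat)
  have rhoB: "\<And>l. l \<in> L \<Longrightarrow> rho dA dB (\<phi> l) = M * Y l * adj M"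
  proof -
    fix l assume l: "l \<in> L"
    note bt = BT[OF l] adj_carrier[OF BT[OF l]]
    have "rho dA dB (\<phi> l) = (M * transpose_mat (B l)) * adj (M * transpose_mat (B l))"
      unfolding rho_def \<phi>_def M_def using Mv_left[OF B_dim[OF l] psi(1)] by simp
    also have "\<dots> = (M * transpose_mat (B l)) * (adj (transpose_mat (B l)) * adj M)"
      using adj_mult[OF Mc bt(1)] by simp
    also have "\<dots> = M * Y l * adj M"
    proof -
      have e1: "M * transpose_mat (B l) * (adj (transpose_mat (B l)) * adj M) = M * (transpose_mat (B l) * (adj (transpose_mat (B l)) * adj M))"
        by (rule assoc_mult_mat[OF Mc bt(1) mult_carrier_mat[OF bt(2) aM]])
      have e2: "M * (transpose_mat (B l) * adj (transpose_mat (B l))) * adj M = M * ((transpose_mat (B l) * adj (transpose_mat (B l))) * adj M)"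
        by (rule assoc_mult_mat[OF Mc mult_carrier_mat[OF bt] aM])
      have e3: "(transpose_mat (B l) * adj (transpose_mat (B l))) * adj M = transpose_mat (B l) * (adj (transpose_mat (B l)) * adj M)"
        by (rule assoc_mult_mat[OF bt aM])
      show ?thesis unfolding Y_def e1 e2 e3 ..
    qed
    finally show "rho dA dB (\<phi> l) = M * Y l * adj M" .
  qed
  have Ysum: "\<And>c d. c < dB \<Longrightarrow> d < dB \<Longrightarrow> (\<Sum>l\<in>L. Y l $$ (c,d)) = 1\<^sub>m dB $$ (c,d)"
  proof -
    fix c d assume c: "c < dB" and d: "d < dB"
    have "\<And>l. l \<in> L \<Longrightarrow> Y l $$ (c,d) = (adj (B l) * B l) $$ (d,c)"
    proof -
      fix l assume l: "l \<in> L"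
      note bt = BT[OF l] adj_carrier[OF BT[OF l]]
      show "Y l $$ (c,d) = (adj (B l) * B l) $$ (d,c)"
        unfolding Y_def using c d B_dim[OF l]
        by (simp add: mult_idx[OF bt] mult_idx[OF adj_carrier[OF B_dim[OF l]] B_dim[OF l]] mult.commute
            del: index_mult_mat(1))
    qed
    then have "(\<Sum>l\<in>L. Y l $$ (c,d)) = (\<Sum>l\<in>L. (adj (B l) * B l) $$ (d,c))" by (rule sum.cong[OF refl])
    also have "\<dots> = 1\<^sub>m dB $$ (c,d)" using B_complete[OF d c] c d by auto
    finally show "(\<Sum>l\<in>L. Y l $$ (c,d)) = 1\<^sub>m dB $$ (c,d)" .
  qed
  have key: "\<And>W :: complex mat. W \<in> carrier_mat dA dA \<Longrightarrow> (\<Sum>l\<in>L. ptr (W * rho dA dB (\<phi> l))) = ptr (W * rho dA dB \<psi>)"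
  proof -
    fix W :: "complex mat" assume W: "W \<in> carrier_mat dA dA"
    have Z: "adj M * W * M \<in> carrier_mat dB dB" using W Mc by auto
    have "(\<Sum>l\<in>L. ptr (W * rho dA dB (\<phi> l))) = (\<Sum>l\<in>L. ptr ((adj M * W * M) * Y l))"
      by (intro sum.cong refl) (simp add: rhoB sandwich[OF W Mc Yc])
    also have "\<dots> = ptr (adj M * W * M)" by (rule ptr_lin[OF Z finL Yc Ysum])
    also have "\<dots> = ptr ((adj M * W * M) * 1\<^sub>m dB)" using right_mult_one_mat[OF Z] by simp
    also have "\<dots> = ptr (W * (M * 1\<^sub>m dB * adj M))" using sandwich[OF W Mc one_carrier_mat] by simp
    also have "M * 1\<^sub>m dB * adj M = rho dA dB \<psi>" unfolding rho_def M_def by simp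
    finally show "(\<Sum>l\<in>L. ptr (W * rho dA dB (\<phi> l))) = ptr (W * rho dA dB \<psi>)" .
  qed
  have qphi: "q = (\<lambda>l. sqnorm (\<phi> l))" unfolding q_def \<phi>_def ..
  have q0: "\<And>l. l \<in> L \<Longrightarrow> q l \<ge> 0" unfolding qphi by (simp add: sqnorm_nonneg)
  have "complex_of_real (\<Sum>l\<in>L. q l) = (\<Sum>l\<in>L. ptr (1\<^sub>m dA * rho dA dB (\<phi> l)))"
    unfolding of_real_sum qphi by (intro sum.cong refl) (simp add: sqnorm_rho \<phi>c)
  also have "\<dots> = ptr (1\<^sub>m dA * rho dA dB \<psi>)" by (rule key[OF one_carrier_mat])
  also have "\<dots> = complex_of_real 1" using sqnorm_rho[OF psi(1)] psi(2) by simp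
  finally have qs: "(\<Sum>l\<in>L. q l) = 1" by (metis of_real_eq_iff)
  define T where "T = {l\<in>L. q l > 0}"
  have finT: "finite T" unfolding T_def using finL by simp
  have qsT: "(\<Sum>l\<in>T. q l) = 1" unfolding T_def using sum_pos_filter[OF finL q0] qs by simp
  have Wne: "W_set dA \<Lambda> \<noteq> {}" by (rule W_set_nonempty[OF spec])
  define S where "S = (\<Sum>l\<in>T. q l * sqrt (F_fid dA dB \<Lambda> (\<phi>' l)))"
  define g where "g = (\<lambda>l. if q l > 0 then q l * sqrt (F_fid dA dB \<Lambda> (\<phi>' l)) else 0)"
  have Sg: "S = (\<Sum>l\<in>L. g l)" unfolding S_def T_def g_def using finL by (rule sum.inter_filter)
  have perl: "\<And>W l. W \<in> W_set dA \<Lambda> \<Longrightarrow> l \<in> L \<Longrightarrow> cmod (ptr (W * rho dA dB (\<phi> l))) \<le> g l"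
  proof -
    fix W l assume W: "W \<in> W_set dA \<Lambda>" and l: "l \<in> L"
    show "cmod (ptr (W * rho dA dB (\<phi> l))) \<le> g l"
    proof (cases "q l > 0")
      case True
      then show ?thesis unfolding g_def \<phi>'_def using UP[OF \<phi>c[OF l] _ W] unfolding qphi \<phi>_def by simp
    next
      case False
      then have "q l = 0" using q0[OF l] by simp
      then have "rho dA dB (\<phi> l) = 0\<^sub>m dA dA" using rho_zero[OF \<phi>c[OF l]] unfolding qphi by simp
      then show ?thesis unfolding g_def using False W_set_carrier[OF W] by (simp add: ptr_def)
    qed
  qed
  have bnd: "\<And>W. W \<in> W_set dA \<Lambda> \<Longrightarrow> (cmod (ptr (W * rho dA dB \<psi>)))\<^sup>2 \<le> S\<^sup>2"
  proof -
    fix W assume W: "W \<in> W_set dA \<Lambda>"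
    have "cmod (ptr (W * rho dA dB \<psi>)) = cmod (\<Sum>l\<in>L. ptr (W * rho dA dB (\<phi> l)))"
      using key[OF W_set_carrier[OF W]] by simp
    also have "\<dots> \<le> (\<Sum>l\<in>L. cmod (ptr (W * rho dA dB (\<phi> l))))" by (rule norm_sum)
    also have "\<dots> \<le> S" unfolding Sg using perl[OF W] by (intro sum_mono) auto
    finally show "(cmod (ptr (W * rho dA dB \<psi>)))\<^sup>2 \<le> S\<^sup>2" by (intro power_mono) auto
  qed
  have F0: "F_fid dA dB \<Lambda> \<psi> \<le> S\<^sup>2" unfolding F_eq[OF psi(1)] by (rule Fm_least[OF Wne bnd])
  have F0nn: "F_fid dA dB \<Lambda> \<psi> \<ge> 0" unfolding F_eq[OF psi(1)] by (rule Fm_nonneg[OF Wne rho_carrier])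
  have fnn: "\<And>l. l \<in> T \<Longrightarrow> F_fid dA dB \<Lambda> (\<phi>' l) \<ge> 0"
  proof -
    fix l assume "l \<in> T"
    then have "\<phi>' l \<in> carrier_vec (dA*dB)" unfolding T_def \<phi>'_def using \<phi>c unfolding \<phi>_def by auto
    then show "F_fid dA dB \<Lambda> (\<phi>' l) \<ge> 0" using F_eq Fm_nonneg[OF Wne rho_carrier] by metis
  qed
  have "S \<ge> sqrt (F_fid dA dB \<Lambda> \<psi>) \<and> (\<Sum>l\<in>T. q l * (1 - F_fid dA dB \<Lambda> (\<phi>' l))) \<le> 1 - F_fid dA dB \<Lambda> \<psi>"
    unfolding S_def by (rule final_step[OF finT _ qsT fnn F0nn F0[unfolded S_def]]) (auto simp: T_def)
  then show ?thesis unfolding S_def T_def E_ent_def .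
qed




lemma sideA:
  assumes dims: "1 \<le> dA" "dA \<le> dB" and spec: "is_spectrum dA \<Lambda>"
    and psi: "\<psi> \<in> carrier_vec (dA * dB)" "sqnorm \<psi> = 1"
    and finK: "finite K" and A_dim: "\<And>k. k \<in> K \<Longrightarrow> A k \<in> carrier_mat dA dA"
    and A_complete: "\<And>i j. i < dA \<Longrightarrow> j < dA \<Longrightarrow> (\<Sum>k\<in>K. (adj (A k) * A k) $$ (i,j)) = 1\<^sub>m dA $$ (i,j)"
  defines "p \<equiv> (\<lambda>k. sqnorm (tensor_id_right dB (A k) *\<^sub>v \<psi>))"
    and "\<psi>' \<equiv> (\<lambda>k. (1 / complex_of_real (sqrt (sqnorm (tensor_id_right dB (A k) *\<^sub>v \<psi>)))) \<cdot>\<^sub>v (tensor_id_right dB (A k) *\<^sub>v \<psi>))"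
  shows "(\<Sum>k\<in>{k\<in>K. p k > 0}. p k * sqrt (F_fid dA dB \<Lambda> (\<psi>' k))) \<ge> sqrt (F_fid dA dB \<Lambda> \<psi>)
      \<and> (\<Sum>k\<in>{k\<in>K. p k > 0}. p k * E_ent dA dB \<Lambda> (\<psi>' k)) \<le> E_ent dA dB \<Lambda> \<psi>"
proof -
  define \<phi> where "\<phi> = (\<lambda>k. tensor_id_right dB (A k) *\<^sub>v \<psi>)"
  have \<phi>c: "\<And>k. k \<in> K \<Longrightarrow> \<phi> k \<in> carrier_vec (dA*dB)"
    unfolding \<phi>_def using mult_mat_vec_carrier[OF tr_carrier[OF A_dim] psi(1)] by blast
  define M where "M = Mv dA dB \<psi>"
  have Mc: "M \<in> carrier_mat dA dB" unfolding M_def by simp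
  have aM: "adj M \<in> carrier_mat dB dA" using Mc by simp
  define \<rho> where "\<rho> = rho dA dB \<psi>"
  have \<rho>c: "\<rho> \<in> carrier_mat dA dA" unfolding \<rho>_def by simp
  have \<rho>M: "\<rho> = M * adj M" unfolding \<rho>_def rho_def M_def ..
  note sq = assoc_mult_mat[of _ dA dA _ dA _ dA] mult_carrier_mat[of _ _ dA]
  have rhoA: "\<And>k. k \<in> K \<Longrightarrow> rho dA dB (\<phi> k) = A k * \<rho> * adj (A k)"
  proof -
    fix k assume k: "k \<in> K"
    note a = A_dim[OF k] adj_carrier[OF A_dim[OF k]]
    have "rho dA dB (\<phi> k) = (A k * M) * adj (A k * M)"
      unfolding rho_def \<phi>_def M_def using Mv_right[OF A_dim[OF k] psi(1)] by simp
    also have "\<dots> = (A k * M) * (adj M * adj (A k))" using adj_mult[OF a(1) Mc] by simp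
    also have "\<dots> = A k * \<rho> * adj (A k)"
    proof -
      have e1: "A k * M * (adj M * adj (A k)) = A k * (M * (adj M * adj (A k)))"
        by (rule assoc_mult_mat[OF a(1) Mc mult_carrier_mat[OF aM a(2)]])
      have e2: "A k * (M * adj M) * adj (A k) = A k * ((M * adj M) * adj (A k))"
        by (rule assoc_mult_mat[OF a(1) mult_carrier_mat[OF Mc aM] a(2)])
      have e3: "(M * adj M) * adj (A k) = M * (adj M * adj (A k))"
        by (rule assoc_mult_mat[OF Mc aM a(2)])
      show ?thesis unfolding \<rho>M e1 e2 e3 ..
    qed
    finally show "rho dA dB (\<phi> k) = A k * \<rho> * adj (A k)" .
  qed
  have Yc: "\<And>k. k \<in> K \<Longrightarrow> adj (A k) * A k \<in> carrier_mat dA dA" using A_dim by (meson adj_carrier mult_carrier_mat)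
  have pphi: "p = (\<lambda>k. sqnorm (\<phi> k))" unfolding p_def \<phi>_def ..
  have p0: "\<And>k. k \<in> K \<Longrightarrow> p k \<ge> 0" unfolding pphi by (simp add: sqnorm_nonneg)
  have "complex_of_real (\<Sum>k\<in>K. p k) = (\<Sum>k\<in>K. ptr (\<rho> * (adj (A k) * A k)))"
    unfolding of_real_sum pphi
  proof (intro sum.cong refl)
    fix k assume k: "k \<in> K"
    note a = A_dim[OF k] adj_carrier[OF A_dim[OF k]]
    have "complex_of_real (sqnorm (\<phi> k)) = ptr (A k * \<rho> * adj (A k))" using sqnorm_rho[OF \<phi>c[OF k]] rhoA[OF k] by simp
    also have "\<dots> = ptr (adj (A k) * (A k * \<rho>))" by (rule ptr_comm[OF mult_carrier_mat[OF a(1) \<rho>c] a(2)])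
    also have "\<dots> = ptr ((adj (A k) * A k) * \<rho>)" using assoc_mult_mat[OF a(2) a(1) \<rho>c] by simp
    also have "\<dots> = ptr (\<rho> * (adj (A k) * A k))" by (rule ptr_comm[OF Yc[OF k] \<rho>c])
    finally show "complex_of_real (sqnorm (\<phi> k)) = ptr (\<rho> * (adj (A k) * A k))" .
  qed
  also have "\<dots> = ptr \<rho>" by (rule ptr_lin[OF \<rho>c finK Yc A_complete])
  also have "\<dots> = complex_of_real 1" using sqnorm_rho[OF psi(1)] psi(2) unfolding \<rho>_def by simp
  finally have ps: "(\<Sum>k\<in>K. p k) = 1" by (metis of_real_eq_iff)
  define T where "T = {k\<in>K. p k > 0}"
  have finT: "finite T" unfolding T_def using finK by simp
  have psT: "(\<Sum>k\<in>T. p k) = 1" unfolding T_def using sum_pos_filter[OF finK p0] ps by simp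
  have Wne: "W_set dA \<Lambda> \<noteq> {}" by (rule W_set_nonempty[OF spec])
  define S where "S = (\<Sum>k\<in>T. p k * sqrt (F_fid dA dB \<Lambda> (\<psi>' k)))"
  define g where "g = (\<lambda>k. if p k > 0 then p k * sqrt (F_fid dA dB \<Lambda> (\<psi>' k)) else 0)"
  have Sg: "S = (\<Sum>k\<in>K. g k)" unfolding S_def T_def g_def using finK by (rule sum.inter_filter)
  have perk: "\<And>W k. W \<in> W_set dA \<Lambda> \<Longrightarrow> k \<in> K \<Longrightarrow> cmod (ptr (W * rho dA dB (\<phi> k))) \<le> g k"
  proof -
    fix W k assume W: "W \<in> W_set dA \<Lambda>" and k: "k \<in> K"
    show "cmod (ptr (W * rho dA dB (\<phi> k))) \<le> g k"
    proof (cases "p k > 0")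
      case True
      then show ?thesis unfolding g_def \<psi>'_def using UP[OF \<phi>c[OF k] _ W] unfolding pphi \<phi>_def by simp
    next
      case False
      then have "p k = 0" using p0[OF k] by simp
      then have "rho dA dB (\<phi> k) = 0\<^sub>m dA dA" using rho_zero[OF \<phi>c[OF k]] unfolding pphi by simp
      then show ?thesis unfolding g_def using False W_set_carrier[OF W] by (simp add: ptr_def)
    qed
  qed
  obtain R where Rc: "R \<in> carrier_mat dA dA" and MR: "M * adj M = R * adj R"
    using sqrt_factor[OF Mc dims(2)] by blast
  have aR: "adj R \<in> carrier_mat dA dA" using Rc by simp
  obtain Q where Q: "unitary_mat dA Q" and RQ: "R * adj R = Q * (adj R * R) * adj Q"
    using unitary_sim[OF Rc] by blast
  have bnd: "\<And>W. W \<in> W_set dA \<Lambda> \<Longrightarrow> (cmod (ptr (W * \<rho>)))\<^sup>2 \<le> S\<^sup>2"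
  proof -
    fix W assume W: "W \<in> W_set dA \<Lambda>"
    have Wc: "W \<in> carrier_mat dA dA" using W_set_carrier[OF W] .
    have Qc: "Q \<in> carrier_mat dA dA" using unitary_carrier[OF Q] .
    define W' where "W' = adj Q * W * Q"
    have W': "W' \<in> W_set dA \<Lambda>" unfolding W'_def using W_set_conj[OF W unitary_adj[OF Q]] by simp
    have W'c: "W' \<in> carrier_mat dA dA" using W_set_carrier[OF W'] .
    define Z where "Z = R * W' * adj R"
    have Zc: "Z \<in> carrier_mat dA dA" unfolding Z_def using mult_carrier_mat[OF mult_carrier_mat[OF Rc W'c] aR] .
    have "ptr (W * \<rho>) = ptr (W * (Q * (adj R * R) * adj Q))" unfolding \<rho>M MR RQ ..
    also have "\<dots> = ptr (W' * (adj R * R))" unfolding W'_def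
      by (rule sandwich[OF Wc Qc mult_carrier_mat[OF aR Rc]])
    also have "\<dots> = ptr (W' * (adj R * 1\<^sub>m dA * adj (adj R)))" using right_mult_one_mat[OF aR] by simp
    also have "\<dots> = ptr (Z * 1\<^sub>m dA)" unfolding Z_def using sandwich[OF W'c aR one_carrier_mat] by simp
    also have "\<dots> = ptr Z" using Zc by simp
    also have "\<dots> = (\<Sum>k\<in>K. ptr (Z * (adj (A k) * A k)))" by (rule ptr_lin[OF Zc finK Yc A_complete, symmetric])
    finally have e: "ptr (W * \<rho>) = (\<Sum>k\<in>K. ptr (Z * (adj (A k) * A k)))" .
    have pk: "\<And>k. k \<in> K \<Longrightarrow> cmod (ptr (Z * (adj (A k) * A k))) \<le> g k"
    proof -
      fix k assume k: "k \<in> K"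
      note a = A_dim[OF k] adj_carrier[OF A_dim[OF k]]
      define C where "C = A k * R"
      have Cc: "C \<in> carrier_mat dA dA" unfolding C_def using a Rc by simp
      obtain Qk where Qk: "unitary_mat dA Qk" and CQ: "C * adj C = Qk * (adj C * C) * adj Qk"
        using unitary_sim[OF Cc] by blast
      have Qkc: "Qk \<in> carrier_mat dA dA" using unitary_carrier[OF Qk] .
      have aC: "adj C = adj R * adj (A k)" unfolding C_def by (rule adj_mult[OF a(1) Rc])
      have "ptr (Z * (adj (A k) * A k)) = ptr (W' * (adj R * (adj (A k) * A k) * adj (adj R)))"
        unfolding Z_def using sandwich[OF W'c aR Yc[OF k]] by simp
      also have "adj R * (adj (A k) * A k) * adj (adj R) = adj C * C"
        unfolding aC unfolding C_def using Rc a by (simp add: sq)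
      also have "adj C * C = adj Qk * (C * adj C) * adj (adj Qk)"
      proof -
        have "adj Qk * (C * adj C) * Qk = adj Qk * (Qk * (adj C * C) * adj Qk) * Qk" unfolding CQ ..
        also have "\<dots> = adj C * C" using Qkc Cc
          by (simp add: sq unitary_cancel1[OF Qk, of _ dA] unitary_left[OF Qk])
        finally show ?thesis by simp
      qed
      also have "ptr (W' * (adj Qk * (C * adj C) * adj (adj Qk))) = ptr ((Qk * W' * adj Qk) * (C * adj C))"
        using sandwich[OF W'c adj_carrier[OF Qkc] mult_carrier_mat[OF Cc adj_carrier[OF Cc]]] by simp
      also have "C * adj C = rho dA dB (\<phi> k)"
        unfolding rhoA[OF k] aC unfolding C_def \<rho>M MR using Rc a by (simp add: sq)
      finally have "ptr (Z * (adj (A k) * A k)) = ptr ((Qk * W' * adj Qk) * rho dA dB (\<phi> k))" .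
      moreover have "Qk * W' * adj Qk \<in> W_set dA \<Lambda>" by (rule W_set_conj[OF W' Qk])
      ultimately show "cmod (ptr (Z * (adj (A k) * A k))) \<le> g k" using perk[OF _ k] by metis
    qed
    have "cmod (ptr (W * \<rho>)) \<le> (\<Sum>k\<in>K. cmod (ptr (Z * (adj (A k) * A k))))" unfolding e by (rule norm_sum)
    also have "\<dots> \<le> S" unfolding Sg using pk by (intro sum_mono) auto
    finally show "(cmod (ptr (W * \<rho>)))\<^sup>2 \<le> S\<^sup>2" by (intro power_mono) auto
  qed
  have F0: "F_fid dA dB \<Lambda> \<psi> \<le> S\<^sup>2" unfolding F_eq[OF psi(1)] \<rho>_def[symmetric] by (rule Fm_least[OF Wne bnd])
  have F0nn: "F_fid dA dB \<Lambda> \<psi> \<ge> 0" unfolding F_eq[OF psi(1)] by (rule Fm_nonneg[OF Wne rho_carrier])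
  have fnn: "\<And>k. k \<in> T \<Longrightarrow> F_fid dA dB \<Lambda> (\<psi>' k) \<ge> 0"
  proof -
    fix k assume "k \<in> T"
    then have "\<psi>' k \<in> carrier_vec (dA*dB)" unfolding T_def \<psi>'_def using \<phi>c unfolding \<phi>_def by auto
    then show "F_fid dA dB \<Lambda> (\<psi>' k) \<ge> 0" using F_eq Fm_nonneg[OF Wne rho_carrier] by metis
  qed
  have "S \<ge> sqrt (F_fid dA dB \<Lambda> \<psi>) \<and> (\<Sum>k\<in>T. p k * (1 - F_fid dA dB \<Lambda> (\<psi>' k))) \<le> 1 - F_fid dA dB \<Lambda> \<psi>"
    unfolding S_def by (rule final_step[OF finT _ psT fnn F0nn F0[unfolded S_def]]) (auto simp: T_def)
  then show ?thesis unfolding S_def T_def E_ent_def .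
qed


theorem theorem2:
  fixes dA dB :: nat and \<Lambda> :: "complex multiset" and \<psi> :: "complex vec"
    and K :: "'k set" and L :: "'l set"
    and A :: "'k \<Rightarrow> complex mat" and B :: "'l \<Rightarrow> complex mat"
  assumes dims: "1 \<le> dA" "dA \<le> dB"
    and spec: "is_spectrum dA \<Lambda>"
    and psi: "\<psi> \<in> carrier_vec (dA * dB)" "sqnorm \<psi> = 1"
    and finK: "finite K"
    and A_dim: "\<And>k. k \<in> K \<Longrightarrow> A k \<in> carrier_mat dA dA"
    and A_complete: "\<And>i j. i < dA \<Longrightarrow> j < dA \<Longrightarrow> (\<Sum>k\<in>K. (adj (A k) * A k) $$ (i,j)) = 1\<^sub>m dA $$ (i,j)"
    and finL: "finite L"
    and B_dim: "\<And>l. l \<in> L \<Longrightarrow> B l \<in> carrier_mat dB dB"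
    and B_complete: "\<And>i j. i < dB \<Longrightarrow> j < dB \<Longrightarrow> (\<Sum>l\<in>L. (adj (B l) * B l) $$ (i,j)) = 1\<^sub>m dB $$ (i,j)"
  shows
    "(let p = (\<lambda>k. sqnorm (tensor_id_right dB (A k) *\<^sub>v \<psi>));
         \<psi>' = (\<lambda>k. (1 / complex_of_real (sqrt (p k))) \<cdot>\<^sub>v (tensor_id_right dB (A k) *\<^sub>v \<psi>))
     in (\<Sum>k\<in>{k\<in>K. p k > 0}. p k * sqrt (F_fid dA dB \<Lambda> (\<psi>' k))) \<ge> sqrt (F_fid dA dB \<Lambda> \<psi>)
      \<and> (\<Sum>k\<in>{k\<in>K. p k > 0}. p k * E_ent dA dB \<Lambda> (\<psi>' k)) \<le> E_ent dA dB \<Lambda> \<psi>)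
   \<and> (let q = (\<lambda>l. sqnorm (tensor_id_left dA (B l) *\<^sub>v \<psi>));
         \<phi>' = (\<lambda>l. (1 / complex_of_real (sqrt (q l))) \<cdot>\<^sub>v (tensor_id_left dA (B l) *\<^sub>v \<psi>))
     in (\<Sum>l\<in>{l\<in>L. q l > 0}. q l * sqrt (F_fid dA dB \<Lambda> (\<phi>' l))) \<ge> sqrt (F_fid dA dB \<Lambda> \<psi>)
      \<and> (\<Sum>l\<in>{l\<in>L. q l > 0}. q l * E_ent dA dB \<Lambda> (\<phi>' l)) \<le> E_ent dA dB \<Lambda> \<psi>)"
  unfolding Let_def
  using sideA[OF dims spec psi finK A_dim A_complete] sideB[OF dims spec psi finL B_dim B_complete]
  by blast

end
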